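(* Let $V\subseteq\mathcal V$ be finite, $\mathcal E\in\mathit{DProg}(V)$, $W\subseteq\mathcal V$ finite and $P,Q$ projectors on $\mathcal H_W$. Then: (1) $sp^p.\mathcal E.(wlp^p.\mathcal E.Q)\sqsubseteq Q$ and $P\sqsubseteq wlp^p.\mathcal E.(sp^p.\mathcal E.P)$; (2) $wp^p.\mathcal E.Q=wlp^p.\mathcal E.Q\wedge wp^p.\mathcal E.I_W$; (3) $sp^p.\mathcal E.(wp^p.\mathcal E.Q)\sqsubseteq Q$, and if $P\sqsubseteq wp^p.\mathcal E.I_W$ then $P\sqsubseteq wp^p.\mathcal E.(sp^p.\mathcal E.P)$.
   Context: $\mathcal V$ is a countably infinite set of qubit variables; $\mathcal H_V=\bigotimes_{q\in V}\mathcal H_q$. $\mathcal D(\mathcal H)$: partial density operators; projectors are identified with their image subspaces, ordered by inclusion $\sqsubseteq$, with $\wedge$ = intersection. $\mathit{DProg}(V)$: completely positive trace-nonincreasing super-operators on $\mathcal L(\mathcal H_V)$. Convention: operators and super-operators are implicitly extended to $\mathcal H_{V\cup W}$ (and larger systems) by tensoring with identities; all projectors are regarded on $\mathcal H_{V\cup W}$. For projectors $P,Q$: $\mathcal E\models_{tot}(P,Q)$ iff for all finite $X\supseteq V\cup W$ and $\rho\in\mathcal D(\mathcal H_X)$, ${\rm tr}(P\rho)\le{\rm tr}(Q\mathcal E(\rho))$; $\mathcal E\models_{par}(P,Q)$ iff for all such $X,\rho$, ${\rm tr}(P\rho)\le{\rm tr}(Q\mathcal E(\rho))+{\rm tr}(\rho)-{\rm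 tr}(\mathcal E(\rho))$. $wp^p.\mathcal E.Q$ is the largest projector $P$ with $\mathcal E\models_{tot}(P,Q)$; $wlp^p.\mathcal E.Q$ the largest projector $P$ with $\mathcal E\models_{par}(P,Q)$; $sp^p.\mathcal E.Q$ the smallest projector $R$ with $\mathcal E\models_{par}(Q,R)$. *)

theory Defs
  imports Complex_Main
begin

(* Qubit variables: nat (countably infinite).
   A computational basis state of H_X (X finite) is an assignment X -> bool,
   represented canonically as a function nat => bool that is False outside X. *)
type_synonym qvar = nat
type_synonym bstate = "qvar \<Rightarrow> bool"
type_synonym op = "bstate \<Rightarrow> bstate \<Rightarrow> complex"   (* matrix entries <f|A|g> *)
type_synonym vec = "bstate \<Rightarrow> complex"
type_synonym superop = "op \<Rightarrow> op"

definition basis :: "qvar set \<Rightarrow> bstate set" where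
  "basis X = {f. \<forall>q. q \<notin> X \<longrightarrow> \<not> f q}"

definition restr :: "qvar set \<Rightarrow> bstate \<Rightarrow> bstate" where
  "restr U f = (\<lambda>q. q \<in> U \<and> f q)"

definition agree :: "qvar set \<Rightarrow> bstate \<Rightarrow> bstate \<Rightarrow> bool" where
  "agree S f g = (\<forall>q\<in>S. f q = g q)"

definition in_L :: "qvar set \<Rightarrow> op \<Rightarrow> bool" where
  "in_L X A = (\<forall>f g. f \<notin> basis X \<or> g \<notin> basis X \<longrightarrow> A f g = 0)"

definition supp_vec :: "qvar set \<Rightarrow> vec \<Rightarrow> bool" where
  "supp_vec X v = (\<forall>f. f \<notin> basis X \<longrightarrow> v f = 0)"

definition mult :: "qvar set \<Rightarrow> op \<Rightarrow> op \<Rightarrow> op" where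
  "mult X A B = (\<lambda>f g. if f \<in> basis X \<and> g \<in> basis X
                       then \<Sum>h\<in>basis X. A f h * B h g else 0)"

definition apply_op :: "qvar set \<Rightarrow> op \<Rightarrow> vec \<Rightarrow> vec" where
  "apply_op X A v = (\<lambda>f. if f \<in> basis X then \<Sum>g\<in>basis X. A f g * v g else 0)"

definition tr :: "qvar set \<Rightarrow> op \<Rightarrow> complex" where
  "tr X A = (\<Sum>f\<in>basis X. A f f)"

definition idop :: "qvar set \<Rightarrow> op" where
  "idop X = (\<lambda>f g. if f \<in> basis X \<and> g \<in> basis X \<and> f = g then 1 else 0)"

definition psd :: "qvar set \<Rightarrow> op \<Rightarrow> bool" where
  "psd X A = (in_L X A \<and>
     (\<forall>v::vec. Im (\<Sum>f\<in>basis X. \<Sum>g\<in>basis X. cnj (v f) * A f g * v g) = 0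
            \<and> 0 \<le> Re (\<Sum>f\<in>basis X. \<Sum>g\<in>basis X. cnj (v f) * A f g * v g)))"

definition dens :: "qvar set \<Rightarrow> op \<Rightarrow> bool" where
  "dens X \<rho> = (psd X \<rho> \<and> Re (tr X \<rho>) \<le> 1)"

definition is_proj :: "qvar set \<Rightarrow> op \<Rightarrow> bool" where
  "is_proj X P = (in_L X P \<and> mult X P P = P \<and> (\<forall>f g. P f g = cnj (P g f)))"

definition img :: "qvar set \<Rightarrow> op \<Rightarrow> vec set" where
  "img X P = {v. supp_vec X v \<and> apply_op X P v = v}"

definition pleq :: "qvar set \<Rightarrow> op \<Rightarrow> op \<Rightarrow> bool" where
  "pleq X P Q = (img X P \<subseteq> img X Q)"

definition pmeet :: "qvar set \<Rightarrow> op \<Rightarrow> op \<Rightarrow> op" where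
  "pmeet X P Q = (THE R. is_proj X R \<and> img X R = img X P \<inter> img X Q)"

(* cylindrical extension A \<otimes> I of an operator on H_U to H_X (U \<subseteq> X) *)
definition ext :: "qvar set \<Rightarrow> qvar set \<Rightarrow> op \<Rightarrow> op" where
  "ext U X A = (\<lambda>f g. if f \<in> basis X \<and> g \<in> basis X \<and> agree (X - U) f g
                      then A (restr U f) (restr U g) else 0)"

definition unit_op :: "bstate \<Rightarrow> bstate \<Rightarrow> op" where
  "unit_op a b = (\<lambda>f g. if f = a \<and> g = b then 1 else 0)"

(* extension E \<otimes> id of a super-operator on L(H_V) to L(H_X) (V \<subseteq> X),
   defined on matrix units |f'><g'| = |f'_V><g'_V| \<otimes> |f'_R><g'_R| and linearly extended *)
definition ext_so :: "qvar set \<Rightarrow> qvar set \<Rightarrow> superop \<Rightarrow> op \<Rightarrow> op" where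
  "ext_so V X E \<rho> = (\<lambda>f g. if f \<in> basis X \<and> g \<in> basis X then
      (\<Sum>f'\<in>basis X. \<Sum>g'\<in>basis X.
          if agree (X - V) f f' \<and> agree (X - V) g g'
          then \<rho> f' g' * E (unit_op (restr V f') (restr V g')) (restr V f) (restr V g)
          else 0)
      else 0)"

(* DProg(V): completely positive, trace-nonincreasing super-operators on L(H_V) *)
definition DProg :: "qvar set \<Rightarrow> superop \<Rightarrow> bool" where
  "DProg V E = (
     (\<forall>A. in_L V A \<longrightarrow> in_L V (E A)) \<and>
     (\<forall>A B c. in_L V A \<longrightarrow> in_L V B \<longrightarrow>
         E (\<lambda>f g. c * A f g + B f g) = (\<lambda>f g. c * E A f g + E B f g)) \<and>
     (\<forall>X. finite X \<longrightarrow> V \<subseteq> X \<longrightarrow> (\<forall>\<rho>. psd X \<rho> \<longrightarrow> psd X (ext_so V X E \<rho>))) \<and>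
     (\<forall>\<rho>. psd V \<rho> \<longrightarrow> Re (tr V (E \<rho>)) \<le> Re (tr V \<rho>)))"

definition sat_tot :: "qvar set \<Rightarrow> qvar set \<Rightarrow> superop \<Rightarrow> op \<Rightarrow> op \<Rightarrow> bool" where
  "sat_tot V U E P Q = (\<forall>X \<rho>. finite X \<longrightarrow> V \<union> U \<subseteq> X \<longrightarrow> dens X \<rho> \<longrightarrow>
      Re (tr X (mult X (ext U X P) \<rho>)) \<le> Re (tr X (mult X (ext U X Q) (ext_so V X E \<rho>))))"

definition sat_par :: "qvar set \<Rightarrow> qvar set \<Rightarrow> superop \<Rightarrow> op \<Rightarrow> op \<Rightarrow> bool" where
  "sat_par V U E P Q = (\<forall>X \<rho>. finite X \<longrightarrow> V \<union> U \<subseteq> X \<longrightarrow> dens X \<rho> \<longrightarrow>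
      Re (tr X (mult X (ext U X P) \<rho>)) \<le> Re (tr X (mult X (ext U X Q) (ext_so V X E \<rho>)))
         + Re (tr X \<rho>) - Re (tr X (ext_so V X E \<rho>)))"

definition wp :: "qvar set \<Rightarrow> qvar set \<Rightarrow> superop \<Rightarrow> op \<Rightarrow> op" where
  "wp V U E Q = (THE P. is_proj (V \<union> U) P \<and> sat_tot V (V \<union> U) E P (ext U (V \<union> U) Q) \<and>
      (\<forall>P'. is_proj (V \<union> U) P' \<and> sat_tot V (V \<union> U) E P' (ext U (V \<union> U) Q)
            \<longrightarrow> pleq (V \<union> U) P' P))"

definition wlp :: "qvar set \<Rightarrow> qvar set \<Rightarrow> superop \<Rightarrow> op \<Rightarrow> op" where
  "wlp V U E Q = (THE P. is_proj (V \<union> U) P \<and> sat_par V (V \<union> U) E P (ext U (V \<union> U) Q) \<and>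
      (\<forall>P'. is_proj (V \<union> U) P' \<and> sat_par V (V \<union> U) E P' (ext U (V \<union> U) Q)
            \<longrightarrow> pleq (V \<union> U) P' P))"

definition sp :: "qvar set \<Rightarrow> qvar set \<Rightarrow> superop \<Rightarrow> op \<Rightarrow> op" where
  "sp V U E Q = (THE R. is_proj (V \<union> U) R \<and> sat_par V (V \<union> U) E (ext U (V \<union> U) Q) R \<and>
      (\<forall>R'. is_proj (V \<union> U) R' \<and> sat_par V (V \<union> U) E (ext U (V \<union> U) Q) R'
            \<longrightarrow> pleq (V \<union> U) R R'))"

end

theory Submission
  imports Defs "HOL-Library.Complex_Order"
begin


definition join :: "bstate \<Rightarrow> bstate \<Rightarrow> bstate" where
  "join a r = (\<lambda>q. a q \<or> r q)"

lemma basis_iff: "f \<in> basis X \<longleftrightarrow> (\<forall>q. f q \<longrightarrow> q \<in> X)"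
  unfolding basis_def by auto

lemma finite_basis: "finite X \<Longrightarrow> finite (basis X)"
proof -
  assume "finite X"
  have "basis X \<subseteq> (\<lambda>Y q. q \<in> Y) ` Pow X"
  proof
    fix f assume "f \<in> basis X"
    then have "f = (\<lambda>q. q \<in> {q. f q})" and "{q. f q} \<subseteq> X" by (auto simp: basis_iff)
    then show "f \<in> (\<lambda>Y q. q \<in> Y) ` Pow X" by blast
  qed
  then show ?thesis using \<open>finite X\<close> by (meson finite_Pow_iff finite_imageI finite_subset)
qed

lemma restr_basis: "U \<subseteq> X \<Longrightarrow> restr U f \<in> basis X"
  unfolding restr_def basis_iff by auto

lemma restr_basis_self[simp]: "restr U f \<in> basis U"
  unfolding restr_def basis_iff by auto

lemma restr_id: "f \<in> basis U \<Longrightarrow> restr U f = f"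
  unfolding restr_def basis_iff by auto

lemma join_basis: "a \<in> basis S \<Longrightarrow> r \<in> basis R \<Longrightarrow> S \<subseteq> X \<Longrightarrow> R \<subseteq> X \<Longrightarrow> join a r \<in> basis X"
  unfolding join_def basis_iff by auto

lemma restr_join1: "a \<in> basis S \<Longrightarrow> r \<in> basis R \<Longrightarrow> S \<inter> R = {} \<Longrightarrow> restr S (join a r) = a"
  unfolding join_def basis_iff restr_def by (rule ext) auto

lemma restr_join2: "a \<in> basis S \<Longrightarrow> r \<in> basis R \<Longrightarrow> S \<inter> R = {} \<Longrightarrow> restr R (join a r) = r"
  unfolding join_def basis_iff restr_def by (rule ext) auto

lemma join_restr: "f \<in> basis (S \<union> R) \<Longrightarrow> join (restr S f) (restr R f) = f"
  unfolding join_def basis_iff restr_def by (rule ext) auto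

lemma bij_join:
  assumes "S \<inter> R = {}"
  shows "bij_betw (\<lambda>(s,r). join s r) (basis S \<times> basis R) (basis (S \<union> R))"
  apply (rule bij_betw_byWitness[where f'="\<lambda>f. (restr S f, restr R f)"])
  using assms by (auto simp: restr_join1 restr_join2 join_restr intro: join_basis)

lemma sum_split:
  assumes "finite S" "finite R" "S \<inter> R = {}"
  shows "(\<Sum>f\<in>basis (S \<union> R). G f) = (\<Sum>s\<in>basis S. \<Sum>r\<in>basis R. G (join s r))"
proof -
  have "(\<Sum>f\<in>basis (S \<union> R). G f) = (\<Sum>p\<in>basis S \<times> basis R. G ((\<lambda>(s,r). join s r) p))"
    using sum.reindex_bij_betw[OF bij_join[OF assms(3)], of G] by simp
  also have "\<dots> = (\<Sum>s\<in>basis S. \<Sum>r\<in>basis R. G (join s r))"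
    by (simp add: sum.cartesian_product split_def)
  finally show ?thesis .
qed

lemma sum_split':
  assumes "finite X" "S \<subseteq> X"
  shows "(\<Sum>f\<in>basis X. G f) = (\<Sum>s\<in>basis S. \<Sum>r\<in>basis (X - S). G (join s r))"
proof -
  have "X = S \<union> (X - S)" using assms by auto
  then have "(\<Sum>f\<in>basis X. G f) = (\<Sum>f\<in>basis (S \<union> (X - S)). G f)" by simp
  also have "\<dots> = (\<Sum>s\<in>basis S. \<Sum>r\<in>basis (X - S). G (join s r))" by (rule sum_split) (use assms in \<open>auto intro: finite_subset\<close>)
  finally show ?thesis .
qed



definition adj :: "op \<Rightarrow> op" where "adj A = (\<lambda>f g. cnj (A g f))"
definition ip :: "qvar set \<Rightarrow> vec \<Rightarrow> vec \<Rightarrow> complex" where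
  "ip X u v = (\<Sum>f\<in>basis X. cnj (u f) * v f)"
definition sf :: "qvar set \<Rightarrow> op \<Rightarrow> vec \<Rightarrow> vec \<Rightarrow> complex" where
  "sf X C u w = (\<Sum>a\<in>basis X. \<Sum>b\<in>basis X. cnj (u a) * C a b * w b)"
definition ket :: "bstate \<Rightarrow> vec" where "ket f = (\<lambda>h. if h = f then 1 else 0)"
definition outer :: "qvar set \<Rightarrow> vec \<Rightarrow> vec \<Rightarrow> op" where
  "outer X u w = (\<lambda>f g. if f \<in> basis X \<and> g \<in> basis X then u f * cnj (w g) else 0)"
definition col :: "op \<Rightarrow> bstate \<Rightarrow> vec" where "col A g = (\<lambda>f. A f g)"

lemma mult_in: "f \<in> basis X \<Longrightarrow> g \<in> basis X \<Longrightarrow> mult X A B f g = (\<Sum>h\<in>basis X. A f h * B h g)"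
  unfolding mult_def by simp
lemma mult_out: "\<not> (f \<in> basis X \<and> g \<in> basis X) \<Longrightarrow> mult X A B f g = 0"
  unfolding mult_def by auto

lemma mult_assoc: "mult X (mult X A B) C = mult X A (mult X B C)"
proof (intro ext)
  fix f g
  show "mult X (mult X A B) C f g = mult X A (mult X B C) f g"
  proof (cases "f \<in> basis X \<and> g \<in> basis X")
    case True
    have "mult X (mult X A B) C f g = (\<Sum>h\<in>basis X. (\<Sum>k\<in>basis X. A f k * B k h) * C h g)"
      using True by (simp add: mult_in)
    also have "\<dots> = (\<Sum>h\<in>basis X. \<Sum>k\<in>basis X. A f k * B k h * C h g)"
      by (simp add: sum_distrib_right)
    also have "\<dots> = (\<Sum>k\<in>basis X. \<Sum>h\<in>basis X. A f k * B k h * C h g)"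
      by (rule sum.swap)
    also have "\<dots> = (\<Sum>k\<in>basis X. A f k * (\<Sum>h\<in>basis X. B k h * C h g))"
      by (simp add: sum_distrib_left mult.assoc)
    also have "\<dots> = mult X A (mult X B C) f g"
      using True by (simp add: mult_in)
    finally show ?thesis .
  qed (simp add: mult_out)
qed

lemma mult_in_L[simp]: "in_L X (mult X A B)"
  unfolding in_L_def mult_def by auto

lemma in_LD1: "in_L X A \<Longrightarrow> f \<notin> basis X \<Longrightarrow> A f g = 0"
  unfolding in_L_def by auto
lemma in_LD2: "in_L X A \<Longrightarrow> g \<notin> basis X \<Longrightarrow> A f g = 0"
  unfolding in_L_def by auto

lemma tr_mult_comm: "tr X (mult X A B) = tr X (mult X B A)"
  unfolding tr_def mult_def by (simp add: mult.commute) (rule sum.swap)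

lemma idop_in_L[simp]: "in_L X (idop X)" unfolding in_L_def idop_def by auto

lemma mult_idop_left: "finite X \<Longrightarrow> in_L X A \<Longrightarrow> mult X (idop X) A = A"
proof (intro ext)
  fix f g assume F: "finite X" and A: "in_L X A"
  show "mult X (idop X) A f g = A f g"
  proof (cases "f \<in> basis X \<and> g \<in> basis X")
    case True
    then have "mult X (idop X) A f g = (\<Sum>h\<in>basis X. if h = f then A h g else 0)"
      by (auto simp: mult_in idop_def intro!: sum.cong)
    then show ?thesis using True F finite_basis by (simp add: sum.delta')
  qed (use A in \<open>auto simp: mult_out in_LD1 in_LD2\<close>)
qed

lemma mult_idop_right: "finite X \<Longrightarrow> in_L X A \<Longrightarrow> mult X A (idop X) = A"
proof (intro ext)
  fix f g assume F: "finite X" and A: "in_L X A"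
  show "mult X A (idop X) f g = A f g"
  proof (cases "f \<in> basis X \<and> g \<in> basis X")
    case True
    then have "mult X A (idop X) f g = (\<Sum>h\<in>basis X. if h = g then A f h else 0)"
      by (auto simp: mult_in idop_def intro!: sum.cong)
    then show ?thesis using True F finite_basis by (simp add: sum.delta')
  qed (use A in \<open>auto simp: mult_out in_LD1 in_LD2\<close>)
qed

lemma mult_add_left: "mult X (\<lambda>f g. A f g + B f g) C = (\<lambda>f g. mult X A C f g + mult X B C f g)"
  by (intro ext) (simp add: mult_def distrib_right sum.distrib)
lemma mult_add_right: "mult X C (\<lambda>f g. A f g + B f g) = (\<lambda>f g. mult X C A f g + mult X C B f g)"
  by (intro ext) (simp add: mult_def distrib_left sum.distrib)
lemma mult_diff_left: "mult X (\<lambda>f g. A f g - B f g) C = (\<lambda>f g. mult X A C f g - mult X B C f g)"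
  by (intro ext) (simp add: mult_def left_diff_distrib sum_subtractf)
lemma mult_diff_right: "mult X C (\<lambda>f g. A f g - B f g) = (\<lambda>f g. mult X C A f g - mult X C B f g)"
  by (intro ext) (simp add: mult_def right_diff_distrib sum_subtractf)
lemma mult_scale_left: "mult X (\<lambda>f g. c * A f g) C = (\<lambda>f g. c * mult X A C f g)"
  by (intro ext) (simp add: mult_def sum_distrib_left mult.assoc)
lemma mult_scale_right: "mult X C (\<lambda>f g. c * A f g) = (\<lambda>f g. c * mult X C A f g)"
  by (intro ext) (simp add: mult_def sum_distrib_left mult.assoc mult.left_commute)

lemma tr_add: "tr X (\<lambda>f g. A f g + B f g) = tr X A + tr X B"
  unfolding tr_def by (simp add: sum.distrib)
lemma tr_diff: "tr X (\<lambda>f g. A f g - B f g) = tr X A - tr X B"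
  unfolding tr_def by (simp add: sum_subtractf)
lemma tr_scale: "tr X (\<lambda>f g. c * A f g) = c * tr X A"
  unfolding tr_def by (simp add: sum_distrib_left)

lemma adj_adj[simp]: "adj (adj A) = A" unfolding adj_def by simp

lemma adj_mult: "adj (mult X A B) = mult X (adj B) (adj A)"
  unfolding adj_def mult_def by (auto intro!: ext simp: mult.commute)

lemma proj_herm: "is_proj X P \<Longrightarrow> adj P = P"
proof -
  assume "is_proj X P"
  then have H: "\<And>f g. P f g = cnj (P g f)" unfolding is_proj_def by blast
  show "adj P = P" unfolding adj_def by (intro ext) (rule H[symmetric])
qed

lemma apply_op_mult: "apply_op X (mult X A B) v = apply_op X A (apply_op X B v)"
proof (intro ext)
  fix f
  show "apply_op X (mult X A B) v f = apply_op X A (apply_op X B v) f"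
  proof (cases "f \<in> basis X")
    case True
    have "apply_op X (mult X A B) v f = (\<Sum>g\<in>basis X. mult X A B f g * v g)"
      using True by (simp add: apply_op_def)
    also have "\<dots> = (\<Sum>g\<in>basis X. (\<Sum>h\<in>basis X. A f h * B h g) * v g)"
      using True by (intro sum.cong refl) (simp add: mult_in)
    also have "\<dots> = (\<Sum>g\<in>basis X. \<Sum>h\<in>basis X. A f h * B h g * v g)"
      by (simp add: sum_distrib_right)
    also have "\<dots> = (\<Sum>h\<in>basis X. \<Sum>g\<in>basis X. A f h * B h g * v g)"
      by (rule sum.swap)
    also have "\<dots> = (\<Sum>h\<in>basis X. A f h * (\<Sum>g\<in>basis X. B h g * v g))"
      by (simp add: sum_distrib_left mult.assoc)
    also have "\<dots> = (\<Sum>h\<in>basis X. A f h * apply_op X B v h)"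
      by (intro sum.cong refl) (simp add: apply_op_def)
    also have "\<dots> = apply_op X A (apply_op X B v) f"
      using True by (simp only: apply_op_def if_True)
    finally show ?thesis .
  next
    case False
    then show ?thesis by (simp only: apply_op_def if_False)
  qed
qed

lemma col_img:
  assumes P: "is_proj X P" shows "col P g \<in> img X P"
proof -
  have L: "in_L X P" and M: "mult X P P = P" using P unfolding is_proj_def by auto
  have "supp_vec X (col P g)" using L unfolding supp_vec_def col_def by (simp add: in_LD1)
  moreover have "apply_op X P (col P g) = col P g"
  proof (intro ext)
    fix f
    show "apply_op X P (col P g) f = col P g f"
    proof (cases "f \<in> basis X \<and> g \<in> basis X")
      case True
      have "apply_op X P (col P g) f = mult X P P f g"
        using True by (simp add: apply_op_def col_def mult_in)
      then show ?thesis using M by (simp add: col_def)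
    next
      case False
      then show ?thesis using L by (auto simp: apply_op_def col_def in_LD1 in_LD2)
    qed
  qed
  ultimately show ?thesis unfolding img_def by simp
qed

lemma img_mult:
  assumes "finite X" "is_proj X A" "is_proj X B" "img X A \<subseteq> img X B"
  shows "mult X B A = A"
proof (intro ext)
  fix f g
  show "mult X B A f g = A f g"
  proof (cases "g \<in> basis X")
    case True
    have "col A g \<in> img X B" using col_img[OF assms(2)] assms(4) by blast
    then have "apply_op X B (col A g) f = col A g f" unfolding img_def by simp
    then show ?thesis
    proof (cases "f \<in> basis X")
      case True2: True
      from \<open>apply_op X B (col A g) f = col A g f\<close> show ?thesis
        using True True2 by (simp add: apply_op_def col_def mult_in)
    next
      case False
      moreover have "in_L X A" using assms(2) unfolding is_proj_def by blast
      ultimately show ?thesis by (simp add: mult_out in_LD1)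
    qed
  next
    case False
    moreover have "in_L X A" using assms(2) unfolding is_proj_def by blast
    ultimately show ?thesis by (simp add: mult_out in_LD2)
  qed
qed

lemma proj_eq_img:
  assumes "finite X" "is_proj X A" "is_proj X B" "img X A = img X B"
  shows "A = B"
proof -
  have 1: "mult X B A = A" using img_mult assms by simp
  have 2: "mult X A B = B" using img_mult assms by simp
  have "A = adj A" using proj_herm[OF assms(2)] by simp
  also have "\<dots> = adj (mult X B A)" using 1 by simp
  also have "\<dots> = mult X A B" using adj_mult proj_herm assms(2,3) by metis
  also have "\<dots> = B" by (rule 2)
  finally show ?thesis .
qed

lemma mult_img:
  assumes "finite X" "mult X B A = A"
  shows "img X A \<subseteq> img X B"
proof
  fix v assume "v \<in> img X A"
  then have "supp_vec X v" "apply_op X A v = v" unfolding img_def by auto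
  moreover have "apply_op X B (apply_op X A v) = apply_op X A v"
    using apply_op_mult[of X B A v] assms(2) by simp
  ultimately show "v \<in> img X B" unfolding img_def by simp
qed

lemma pleq_iff_mult:
  assumes "finite X" "is_proj X A" "is_proj X B"
  shows "pleq X A B \<longleftrightarrow> mult X B A = A"
  using img_mult[OF assms] mult_img[OF assms(1)] unfolding pleq_def by blast



lemma nonneg_complex_iff: "0 \<le> (z::complex) \<longleftrightarrow> Im z = 0 \<and> 0 \<le> Re z"
  by (auto simp: less_eq_complex_def)

lemma psd_iff: "psd X C \<longleftrightarrow> in_L X C \<and> (\<forall>v. 0 \<le> sf X C v v)"
  unfolding psd_def sf_def nonneg_complex_iff by auto

lemma proj_props: "is_proj X P \<Longrightarrow> in_L X P \<and> mult X P P = P"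
  unfolding is_proj_def by blast

lemma proj_herm_apply: "is_proj X P \<Longrightarrow> P f g = cnj (P g f)"
  unfolding is_proj_def by blast

lemma sf_ip: "sf X C u w = ip X u (apply_op X C w)"
  unfolding sf_def ip_def apply_op_def
  by (auto simp: sum_distrib_left mult.assoc intro!: sum.cong)

lemma ip_adj: "ip X u (apply_op X A w) = ip X (apply_op X (adj A) u) w"
proof -
  have "ip X u (apply_op X A w) = (\<Sum>f\<in>basis X. \<Sum>g\<in>basis X. cnj (u f) * (A f g * w g))"
    unfolding ip_def apply_op_def by (auto simp: sum_distrib_left intro!: sum.cong)
  also have "\<dots> = (\<Sum>g\<in>basis X. \<Sum>f\<in>basis X. cnj (u f) * (A f g * w g))"
    by (rule sum.swap)
  also have "\<dots> = ip X (apply_op X (adj A) u) w"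
    unfolding ip_def apply_op_def adj_def
    by (auto simp: sum_distrib_right sum_distrib_left mult.assoc mult.commute mult.left_commute intro!: sum.cong)
  finally show ?thesis .
qed

lemma sf_add_left: "sf X C (\<lambda>x. u x + t * w x) z = sf X C u z + cnj t * sf X C w z"
  unfolding sf_def by (simp add: distrib_right sum.distrib sum_distrib_left mult.assoc)

lemma sf_add_right: "sf X C z (\<lambda>x. u x + t * w x) = sf X C z u + t * sf X C z w"
  unfolding sf_def by (simp add: distrib_left sum.distrib sum_distrib_left mult.assoc mult.left_commute)

lemma sf_expand: "sf X C (\<lambda>x. u x + t * w x) (\<lambda>x. u x + t * w x)
   = sf X C u u + t * sf X C u w + cnj t * sf X C w u + cnj t * t * sf X C w w"
  by (simp add: sf_add_left sf_add_right algebra_simps)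

lemma sf_ket_left: "finite X \<Longrightarrow> f \<in> basis X \<Longrightarrow> sf X C (ket f) v = (\<Sum>b\<in>basis X. C f b * v b)"
proof -
  assume F: "finite X" "f \<in> basis X"
  have "sf X C (ket f) v = (\<Sum>a\<in>basis X. if a = f then (\<Sum>b\<in>basis X. C f b * v b) else 0)"
    unfolding sf_def ket_def by (intro sum.cong refl) auto
  also have "\<dots> = (\<Sum>b\<in>basis X. C f b * v b)"
    using F finite_basis by (simp add: sum.delta')
  finally show ?thesis .
qed

lemma sf_ket_right: "finite X \<Longrightarrow> g \<in> basis X \<Longrightarrow> sf X C v (ket g) = (\<Sum>a\<in>basis X. cnj (v a) * C a g)"
proof -
  assume F: "finite X" "g \<in> basis X"
  have "sf X C v (ket g) = (\<Sum>a\<in>basis X. \<Sum>b\<in>basis X. if b = g then cnj (v a) * C a g else 0)"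
    unfolding sf_def ket_def by (intro sum.cong refl) auto
  also have "\<dots> = (\<Sum>a\<in>basis X. cnj (v a) * C a g)"
    using F finite_basis by (simp add: sum.delta')
  finally show ?thesis .
qed

lemma sf_ket_ket: "finite X \<Longrightarrow> f \<in> basis X \<Longrightarrow> g \<in> basis X \<Longrightarrow> sf X C (ket f) (ket g) = C f g"
proof -
  assume F: "finite X" "f \<in> basis X" "g \<in> basis X"
  have "sf X C (ket f) (ket g) = (\<Sum>b\<in>basis X. if b = g then C f g else 0)"
    using F by (simp add: sf_ket_left) (intro sum.cong refl, auto simp: ket_def)
  also have "\<dots> = C f g" using F finite_basis by (simp add: sum.delta')
  finally show ?thesis .
qed

lemma psd_herm:
  assumes F: "finite X" and P: "psd X C"
  shows "C f g = cnj (C g f)"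
proof (cases "f \<in> basis X \<and> g \<in> basis X")
  case True
  have nn: "\<And>v. Im (sf X C v v) = 0" using P by (auto simp: psd_iff nonneg_complex_iff)
  have ff: "Im (C f f) = 0" using nn[of "ket f"] True F by (simp add: sf_ket_ket)
  have gg: "Im (C g g) = 0" using nn[of "ket g"] True F by (simp add: sf_ket_ket)
  have e: "\<And>t. sf X C (\<lambda>x. ket f x + t * ket g x) (\<lambda>x. ket f x + t * ket g x)
      = C f f + t * C f g + cnj t * C g f + cnj t * t * C g g"
    using True F by (simp add: sf_expand sf_ket_ket)
  have 1: "Im (C f g + C g f) = 0" using nn[of "\<lambda>x. ket f x + 1 * ket g x"] e[of 1] ff gg by simp
  have 2: "Re (C f g) - Re (C g f) = 0" using nn[of "\<lambda>x. ket f x + \<i> * ket g x"] e[of "\<i>"] ff gg by simp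
  show ?thesis using 1 2 by (simp add: complex_eq_iff)
next
  case False
  have "in_L X C" using P by (simp add: psd_iff)
  then show ?thesis using False by (auto simp: in_LD1 in_LD2)
qed

lemma quad_zero:
  fixes x c :: complex
  assumes c: "0 \<le> c" and H: "\<And>t. 0 \<le> Re (t * cnj x + cnj t * x + cnj t * t * c)"
  shows "x = 0"
proof -
  define r where "r = 1 / (Re c + 1)"
  have cr: "Im c = 0" "Re c \<ge> 0" using c by (auto simp: nonneg_complex_iff)
  have r: "r > 0" "r * Re c < 1" using cr by (auto simp: r_def field_simps)
  have "0 \<le> Re ((- of_real r * x) * cnj x + cnj (- of_real r * x) * x + cnj (- of_real r * x) * (- of_real r * x) * c)"
    by (rule H)
  also have "\<dots> = ((Re x)^2 + (Im x)^2) * (r * (r * Re c - 2))"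
    using cr by (simp add: algebra_simps power2_eq_square)
  finally have A: "0 \<le> ((Re x)^2 + (Im x)^2) * (r * (r * Re c - 2))" .
  moreover have "r * (r * Re c - 2) < 0" using r by (simp add: mult_pos_neg)
  ultimately have "(Re x)^2 + (Im x)^2 \<le> 0" by (meson mult_less_0_iff not_le order_le_less)
  then have "Re x = 0 \<and> Im x = 0" by (smt (verit) zero_le_power2 power2_eq_square mult_eq_0_iff)
  then show ?thesis by (simp add: complex_eq_iff)
qed

lemma psd_kernel:
  assumes F: "finite X" and P: "psd X C" and Z: "sf X C v v = 0"
  shows "apply_op X C v = (\<lambda>f. 0)"
proof (intro ext)
  fix f0
  show "apply_op X C v f0 = 0"
  proof (cases "f0 \<in> basis X")
    case True
    define x where "x = sf X C (ket f0) v"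
    have xa: "apply_op X C v f0 = x" using True F by (simp add: x_def sf_ket_left apply_op_def)
    have y: "sf X C v (ket f0) = cnj x"
    proof -
      have "sf X C v (ket f0) = (\<Sum>a\<in>basis X. cnj (v a) * C a f0)" using True F by (simp add: sf_ket_right)
      also have "\<dots> = (\<Sum>a\<in>basis X. cnj (C f0 a * v a))"
        by (intro sum.cong refl) (subst psd_herm[OF F P, of _ f0], simp add: mult.commute)
      also have "\<dots> = cnj x" using True F by (simp add: x_def sf_ket_left)
      finally show ?thesis .
    qed
    have c: "0 \<le> C f0 f0" using P True F sf_ket_ket[OF F True True, of C] by (metis psd_iff)
    have "x = 0"
    proof (rule quad_zero[OF c])
      fix t
      have "0 \<le> sf X C (\<lambda>x. v x + t * ket f0 x) (\<lambda>x. v x + t * ket f0 x)"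
        using P by (simp add: psd_iff)
      also have "sf X C (\<lambda>x. v x + t * ket f0 x) (\<lambda>x. v x + t * ket f0 x)
          = t * cnj x + cnj t * x + cnj t * t * C f0 f0"
        by (simp add: sf_expand Z y x_def[symmetric] sf_ket_ket[OF F True True])
      finally show "0 \<le> Re (t * cnj x + cnj t * x + cnj t * t * C f0 f0)"
        by (simp add: nonneg_complex_iff)
    qed
    then show ?thesis using xa by simp
  qed (simp add: apply_op_def)
qed

lemma tr_psd: "finite X \<Longrightarrow> psd X C \<Longrightarrow> 0 \<le> tr X C"
  unfolding tr_def
  by (rule sum_nonneg) (metis psd_iff sf_ket_ket)

lemma psd_sandwich:
  assumes F: "finite X" and P: "psd X \<rho>"
  shows "psd X (mult X (mult X A \<rho>) (adj A))"
  unfolding psd_iff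
proof (intro conjI allI)
  fix w
  have "sf X (mult X (mult X A \<rho>) (adj A)) w w = ip X w (apply_op X A (apply_op X \<rho> (apply_op X (adj A) w)))"
    by (simp add: sf_ip apply_op_mult)
  also have "\<dots> = ip X (apply_op X (adj A) w) (apply_op X \<rho> (apply_op X (adj A) w))"
    by (simp add: ip_adj)
  also have "\<dots> = sf X \<rho> (apply_op X (adj A) w) (apply_op X (adj A) w)" by (simp add: sf_ip)
  finally show "0 \<le> sf X (mult X (mult X A \<rho>) (adj A)) w w" using P by (simp add: psd_iff)
qed simp

lemma tr_proj_psd:
  assumes F: "finite X" and P: "is_proj X P" and A: "psd X A"
  shows "0 \<le> tr X (mult X P A)"
proof -
  have "tr X (mult X P A) = tr X (mult X (mult X P P) A)" using proj_props[OF P] by simp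
  also have "\<dots> = tr X (mult X P (mult X P A))" by (simp add: mult_assoc)
  also have "\<dots> = tr X (mult X (mult X P A) P)" by (rule tr_mult_comm)
  also have "\<dots> = tr X (mult X (mult X P A) (adj P))" using proj_herm[OF P] by simp
  finally show ?thesis using tr_psd[OF F psd_sandwich[OF F A]] by simp
qed

definition ident_minus :: "qvar set \<Rightarrow> op \<Rightarrow> op" where
  "ident_minus X P = (\<lambda>f g. idop X f g - P f g)"

lemma ident_minus_proj:
  assumes F: "finite X" and P: "is_proj X P"
  shows "is_proj X (ident_minus X P)"
proof -
  have L: "in_L X P" and M: "mult X P P = P" using proj_props[OF P] by auto
  have "in_L X (ident_minus X P)" using L unfolding in_L_def ident_minus_def idop_def by auto
  moreover have "mult X (ident_minus X P) (ident_minus X P) = ident_minus X P"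
    unfolding ident_minus_def
    by (simp add: mult_diff_left mult_diff_right mult_idop_left mult_idop_right F L M)
  moreover have "\<forall>f g. ident_minus X P f g = cnj (ident_minus X P g f)"
  proof (intro allI)
    fix f g
    show "ident_minus X P f g = cnj (ident_minus X P g f)"
      unfolding ident_minus_def idop_def by (subst proj_herm_apply[OF P, of f g]) auto
  qed
  ultimately show ?thesis unfolding is_proj_def by blast
qed

lemma tr_proj_le:
  assumes F: "finite X" and P: "is_proj X P" and A: "psd X A"
  shows "tr X (mult X P A) \<le> tr X A"
proof -
  have LA: "in_L X A" using A by (simp add: psd_iff)
  have "0 \<le> tr X (mult X (ident_minus X P) A)" by (rule tr_proj_psd[OF F ident_minus_proj[OF F P] A])
  also have "tr X (mult X (ident_minus X P) A) = tr X A - tr X (mult X P A)"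
    unfolding ident_minus_def by (simp add: mult_diff_left tr_diff mult_idop_left F LA)
  finally show ?thesis by simp
qed



definition subsp :: "qvar set \<Rightarrow> vec set \<Rightarrow> bool" where
  "subsp S F = (F \<subseteq> {v. supp_vec S v} \<and> (\<lambda>f. 0) \<in> F \<and> (\<forall>u\<in>F. \<forall>w\<in>F. \<forall>c. (\<lambda>f. u f + c * w f) \<in> F))"

lemma apply_op_lin: "apply_op X A (\<lambda>f. u f + c * w f) = (\<lambda>f. apply_op X A u f + c * apply_op X A w f)"
  unfolding apply_op_def by (auto intro!: ext simp: distrib_left sum.distrib sum_distrib_left mult.left_commute)

lemma apply_op_zero: "apply_op X A (\<lambda>f. 0) = (\<lambda>f. 0)"
  unfolding apply_op_def by auto

lemma supp_apply: "supp_vec X (apply_op X A v)"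
  unfolding supp_vec_def apply_op_def by auto

lemma img_subsp: "subsp S (img S P)"
  unfolding subsp_def img_def
  by (auto simp: apply_op_lin apply_op_zero supp_vec_def)

lemma subsp_inter: "subsp S F \<Longrightarrow> subsp S G \<Longrightarrow> subsp S (F \<inter> G)"
  unfolding subsp_def by auto

lemma apply_proj_img: "is_proj X P \<Longrightarrow> apply_op X P v \<in> img X P"
  unfolding img_def using proj_props[of X P]
  by (auto simp: supp_apply apply_op_mult[symmetric])

lemma ip_real: "Im (ip X u u) = 0" and ip_nonneg: "0 \<le> Re (ip X u u)"
  unfolding ip_def by (auto simp: sum_nonneg)

lemma ip_pos: "finite X \<Longrightarrow> supp_vec X u \<Longrightarrow> u \<noteq> (\<lambda>f. 0) \<Longrightarrow> 0 < Re (ip X u u)"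
proof -
  assume F: "finite X" "supp_vec X u" "u \<noteq> (\<lambda>f. 0)"
  then obtain f where f: "u f \<noteq> 0" by auto
  then have fb: "f \<in> basis X" using F(2) unfolding supp_vec_def by auto
  have "Re (ip X u u) = (\<Sum>g\<in>basis X. Re (cnj (u g) * u g))" unfolding ip_def by (simp add: Re_sum)
  also have "\<dots> \<ge> Re (cnj (u f) * u f)"
    by (rule member_le_sum) (use fb F finite_basis in auto)
  moreover have "Re (cnj (u f) * u f) = (Re (u f))^2 + (Im (u f))^2"
    by (simp add: power2_eq_square)
  moreover have "(Re (u f))^2 + (Im (u f))^2 > 0" using f
    by (simp add: complex_eq_iff sum_power2_gt_zero_iff)
  ultimately show ?thesis by linarith
qed

lemma proj_diag_le1:
  assumes F: "finite X" and P: "is_proj X P"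
  shows "Re (P f f) \<le> 1"
proof (cases "f \<in> basis X")
  case True
  have M: "mult X P P = P" using proj_props[OF P] by simp
  have "P f f = (\<Sum>h\<in>basis X. P f h * P h f)" using fun_cong[OF fun_cong[OF M, of f], of f] True
    by (simp add: mult_in)
  also have "\<dots> = (\<Sum>h\<in>basis X. P f h * cnj (P f h))"
    by (intro sum.cong refl) (subst proj_herm_apply[OF P, of _ f], simp)
  finally have e: "P f f = (\<Sum>h\<in>basis X. P f h * cnj (P f h))" .
  have im: "Im (P f f) = 0" using proj_herm_apply[OF P, of f f] by (metis cnj.simps(2) neg_equal_zero)
  have "Re (P f f) = (\<Sum>h\<in>basis X. Re (P f h * cnj (P f h)))" using e by (simp add: Re_sum)
  also have "\<dots> \<ge> Re (P f f * cnj (P f f))"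
    by (rule member_le_sum) (use True F finite_basis in auto)
  finally have "Re (P f f) * Re (P f f) \<le> Re (P f f)" using im by simp
  then show ?thesis
  proof -
    assume A: "Re (P f f) * Re (P f f) \<le> Re (P f f)"
    show ?thesis
    proof (rule ccontr)
      assume "\<not> Re (P f f) \<le> 1"
      then have "1 < Re (P f f)" by simp
      then have "Re (P f f) * 1 < Re (P f f) * Re (P f f)" by (intro mult_strict_left_mono) auto
      then show False using A by simp
    qed
  qed
next
  case False
  have "in_L X P" using proj_props[OF P] by simp
  then show ?thesis using False by (simp add: in_LD1)
qed

lemma proj_tr_le:
  assumes F: "finite X" and P: "is_proj X P"
  shows "Re (tr X P) \<le> real (card (basis X))"
proof -
  have "Re (tr X P) = (\<Sum>f\<in>basis X. Re (P f f))" unfolding tr_def by (simp add: Re_sum)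
  also have "\<dots> \<le> (\<Sum>f\<in>basis X. 1)" by (rule sum_mono) (rule proj_diag_le1[OF F P])
  finally show ?thesis by simp
qed

lemma zero_proj: "is_proj X (\<lambda>f g. 0)"
  unfolding is_proj_def in_L_def mult_def by (auto simp: fun_eq_iff)

lemma img_zero: "img X (\<lambda>f g. 0) = {\<lambda>f. 0}"
  unfolding img_def apply_op_def supp_vec_def by (auto simp: fun_eq_iff)

lemma proj_extend:
  assumes F: "finite X" and P: "is_proj X P" and u: "supp_vec X u" "u \<noteq> (\<lambda>f. 0)"
    and Pu: "apply_op X P u = (\<lambda>f. 0)"
  defines "c \<equiv> ip X u u"
  defines "P' \<equiv> (\<lambda>f g. P f g + outer X u u f g / c)"
  shows "is_proj X P'" and "Re (tr X P') = Re (tr X P) + 1"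
    and "\<And>v. v \<in> img X P' \<Longrightarrow> v = (\<lambda>f. apply_op X P v f + (ip X u v / c) * u f)"
proof -
  have L: "in_L X P" and M: "mult X P P = P" using proj_props[OF P] by auto
  have cpos: "0 < Re c" using ip_pos[OF F u] by (simp add: c_def)
  have creal: "cnj c = c" using ip_real[of X u] by (simp add: c_def complex_eq_iff)
  have c0: "c \<noteq> 0" using cpos by auto
  have Pu': "\<And>f. f \<in> basis X \<Longrightarrow> (\<Sum>h\<in>basis X. P f h * u h) = 0"
  proof -
    fix f assume "f \<in> basis X"
    then show "(\<Sum>h\<in>basis X. P f h * u h) = 0" using fun_cong[OF Pu, of f] unfolding apply_op_def by simp
  qed
  have uP: "\<And>g. g \<in> basis X \<Longrightarrow> (\<Sum>h\<in>basis X. cnj (u h) * P h g) = 0"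
  proof -
    fix g assume g: "g \<in> basis X"
    have "(\<Sum>h\<in>basis X. cnj (u h) * P h g) = cnj (\<Sum>h\<in>basis X. P g h * u h)"
      by (simp add: mult.commute) (intro sum.cong refl, subst proj_herm_apply[OF P, of _ g], simp)
    then show "(\<Sum>h\<in>basis X. cnj (u h) * P h g) = 0" using Pu'[OF g] by simp
  qed
  have cc: "(\<Sum>h\<in>basis X. cnj (u h) * u h) = c" unfolding c_def ip_def by simp
  have "in_L X P'" using L unfolding P'_def in_L_def outer_def by auto
  moreover have "mult X P' P' = P'"
  proof (intro ext)
    fix f g
    show "mult X P' P' f g = P' f g"
    proof (cases "f \<in> basis X \<and> g \<in> basis X")
      case True
      have "mult X P' P' f g = (\<Sum>h\<in>basis X. P f h * P h g + (P f h * u h) * (cnj (u g) / c)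
            + (u f / c) * (cnj (u h) * P h g) + (u f * cnj (u g) / (c * c)) * (cnj (u h) * u h))"
        using True c0 by (simp add: mult_in P'_def outer_def) (intro sum.cong refl, auto simp: field_simps)
      also have "\<dots> = mult X P P f g + (\<Sum>h\<in>basis X. P f h * u h) * (cnj (u g) / c)
            + (u f / c) * (\<Sum>h\<in>basis X. cnj (u h) * P h g) + (u f * cnj (u g) / (c * c)) * (\<Sum>h\<in>basis X. cnj (u h) * u h)"
        using True by (simp add: sum.distrib sum_distrib_left sum_distrib_right mult_in sum_divide_distrib)
      also have "\<dots> = P f g + u f * cnj (u g) / c"
        using True c0 by (simp add: M Pu' uP cc)
      finally show ?thesis using True by (simp add: P'_def outer_def)
    next
      case False
      then show ?thesis using L by (auto simp: mult_out P'_def outer_def in_LD1 in_LD2)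
    qed
  qed
  moreover have "\<forall>f g. P' f g = cnj (P' g f)"
  proof (intro allI)
    fix f g
    show "P' f g = cnj (P' g f)"
      unfolding P'_def outer_def by (subst proj_herm_apply[OF P, of f g]) (auto simp: creal)
  qed
  ultimately show "is_proj X P'" unfolding is_proj_def by blast
  have "tr X (outer X u u) = c" unfolding tr_def outer_def c_def ip_def by (simp add: mult.commute)
  then have "tr X P' = tr X P + 1" unfolding P'_def tr_def
    using c0 by (simp add: sum.distrib sum_divide_distrib[symmetric])
  then show "Re (tr X P') = Re (tr X P) + 1" by simp
  fix v assume "v \<in> img X P'"
  then have v: "apply_op X P' v = v" "supp_vec X v" unfolding img_def by auto
  show "v = (\<lambda>f. apply_op X P v f + (ip X u v / c) * u f)"
  proof (intro ext)
    fix f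
    show "v f = apply_op X P v f + (ip X u v / c) * u f"
    proof (cases "f \<in> basis X")
      case True
      have "v f = apply_op X P' v f" using v by simp
      also have "\<dots> = (\<Sum>g\<in>basis X. P f g * v g + u f * (cnj (u g) * v g) / c)"
        using True c0 by (simp add: apply_op_def P'_def outer_def) (intro sum.cong refl, auto simp: field_simps)
      also have "\<dots> = apply_op X P v f + (\<Sum>g\<in>basis X. u f * (cnj (u g) * v g) / c)"
        using True by (simp add: sum.distrib apply_op_def)
      also have "(\<Sum>g\<in>basis X. u f * (cnj (u g) * v g) / c) = (ip X u v / c) * u f"
        unfolding ip_def sum_divide_distrib sum_distrib_right
        by (intro sum.cong refl) (simp add: field_simps)
      finally show ?thesis .
    next
      case False
      then show ?thesis using v u unfolding supp_vec_def apply_op_def by simp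
    qed
  qed
qed

lemma exists_proj:
  assumes F: "finite X" and S: "subsp X G"
  shows "\<exists>P. is_proj X P \<and> img X P = G"
proof -
  have supp: "\<And>v. v \<in> G \<Longrightarrow> supp_vec X v" using S unfolding subsp_def by auto
  have cl: "\<And>u w c. u \<in> G \<Longrightarrow> w \<in> G \<Longrightarrow> (\<lambda>f. u f + c * w f) \<in> G" using S unfolding subsp_def by auto
  have z: "(\<lambda>f. 0) \<in> G" using S unfolding subsp_def by auto
  have main: "\<exists>P. is_proj X P \<and> img X P \<subseteq> G \<and> (img X P = G \<or> real n \<le> Re (tr X P))" for n
  proof (induction n)
    case 0
    show ?case by (rule exI[of _ "\<lambda>f g. 0"]) (simp add: zero_proj img_zero z tr_def)
  next
    case (Suc n)
    then obtain P where P: "is_proj X P" "img X P \<subseteq> G" "img X P = G \<or> real n \<le> Re (tr X P)" by blast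
    show ?case
    proof (cases "img X P = G")
      case True then show ?thesis using P by blast
    next
      case False
      then obtain w where w: "w \<in> G" "w \<notin> img X P" using P(2) by blast
      define u where "u = (\<lambda>f. w f + (-1) * apply_op X P w f)"
      have Pw: "apply_op X P w \<in> G" using apply_proj_img[OF P(1)] P(2) by blast
      have uG: "u \<in> G" unfolding u_def by (rule cl[OF w(1) Pw])
      have M: "mult X P P = P" using proj_props[OF P(1)] by simp
      have Pu: "apply_op X P u = (\<lambda>f. 0)"
        unfolding u_def apply_op_lin apply_op_mult[symmetric] M by simp
      have u0: "u \<noteq> (\<lambda>f. 0)"
      proof
        assume "u = (\<lambda>f. 0)"
        then have "\<And>f. w f + (-1) * apply_op X P w f = 0" unfolding u_def by metis
        then have "apply_op X P w = w" by (intro ext) (simp add: algebra_simps)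
        then have "w \<in> img X P" using supp[OF w(1)] unfolding img_def by simp
        then show False using w(2) by simp
      qed
      define c where "c = ip X u u"
      define P' where "P' = (\<lambda>f g. P f g + outer X u u f g / c)"
      have P': "is_proj X P'" "Re (tr X P') = Re (tr X P) + 1"
        "\<And>v. v \<in> img X P' \<Longrightarrow> v = (\<lambda>f. apply_op X P v f + (ip X u v / c) * u f)"
        using proj_extend[OF F P(1) supp[OF uG] u0 Pu] unfolding c_def P'_def by auto
      have "img X P' \<subseteq> G"
      proof
        fix v assume "v \<in> img X P'"
        then have "v = (\<lambda>f. apply_op X P v f + (ip X u v / c) * u f)" by (rule P'(3))
        moreover have "apply_op X P v \<in> G" using apply_proj_img[OF P(1)] P(2) by blast
        ultimately show "v \<in> G" using cl[OF _ uG] by metis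
      qed
      moreover have "real (Suc n) \<le> Re (tr X P')"
        using P(3) False P'(2) by simp
      ultimately show ?thesis using P'(1) by blast
    qed
  qed
  obtain P where P: "is_proj X P" "img X P \<subseteq> G" "img X P = G \<or> real (Suc (card (basis X))) \<le> Re (tr X P)"
    using main by blast
  then show ?thesis using proj_tr_le[OF F P(1)] by auto
qed

lemma the_proj_eq:
  assumes F: "finite X" and P0: "is_proj X P0" "Pr P0" "\<forall>P'. is_proj X P' \<and> Pr P' \<longrightarrow> pleq X P' P0"
  shows "(THE P. is_proj X P \<and> Pr P \<and> (\<forall>P'. is_proj X P' \<and> Pr P' \<longrightarrow> pleq X P' P)) = P0"
proof (rule the_equality)
  show "is_proj X P0 \<and> Pr P0 \<and> (\<forall>P'. is_proj X P' \<and> Pr P' \<longrightarrow> pleq X P' P0)" using P0 by blast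
next
  fix P assume A: "is_proj X P \<and> Pr P \<and> (\<forall>P'. is_proj X P' \<and> Pr P' \<longrightarrow> pleq X P' P)"
  then have "pleq X P0 P" "pleq X P P0" using P0 by auto
  then show "P = P0" using proj_eq_img[OF F] A P0(1) unfolding pleq_def by blast
qed

lemma the_proj_eq_min:
  assumes F: "finite X" and P0: "is_proj X P0" "Pr P0" "\<forall>P'. is_proj X P' \<and> Pr P' \<longrightarrow> pleq X P0 P'"
  shows "(THE P. is_proj X P \<and> Pr P \<and> (\<forall>P'. is_proj X P' \<and> Pr P' \<longrightarrow> pleq X P P')) = P0"
proof (rule the_equality)
  show "is_proj X P0 \<and> Pr P0 \<and> (\<forall>P'. is_proj X P' \<and> Pr P' \<longrightarrow> pleq X P0 P')" using P0 by blast
next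
  fix P assume A: "is_proj X P \<and> Pr P \<and> (\<forall>P'. is_proj X P' \<and> Pr P' \<longrightarrow> pleq X P P')"
  then have "pleq X P0 P" "pleq X P P0" using P0 by auto
  then show "P = P0" using proj_eq_img[OF F] A P0(1) unfolding pleq_def by blast
qed

lemma pmeet_eq:
  assumes F: "finite X" and R: "is_proj X R" "img X R = img X A \<inter> img X B"
  shows "pmeet X A B = R"
  unfolding pmeet_def
proof (rule the_equality)
  show "is_proj X R \<and> img X R = img X A \<inter> img X B" using R by blast
next
  fix P assume "is_proj X P \<and> img X P = img X A \<inter> img X B"
  then show "P = R" using proj_eq_img[OF F] R by auto
qed



lemma join_basisX: "S \<subseteq> X \<Longrightarrow> s \<in> basis S \<Longrightarrow> r \<in> basis (X - S) \<Longrightarrow> join s r \<in> basis X"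
  using join_basis[of s S r "X - S" X] by auto

lemma restr_join_S: "s \<in> basis S \<Longrightarrow> r \<in> basis (X - S) \<Longrightarrow> restr S (join s r) = s"
  by (rule restr_join1) auto

lemma restr_join_R: "s \<in> basis S \<Longrightarrow> r \<in> basis (X - S) \<Longrightarrow> restr (X - S) (join s r) = r"
  by (rule restr_join2) auto

lemma join_restr_X: "S \<subseteq> X \<Longrightarrow> f \<in> basis X \<Longrightarrow> join (restr S f) (restr (X - S) f) = f"
proof -
  assume A: "S \<subseteq> X" "f \<in> basis X"
  have "S \<union> (X - S) = X" using A(1) by blast
  then show ?thesis using join_restr[of f S "X - S"] A(2) by simp
qed

lemma agree_join: "s \<in> basis S \<Longrightarrow> t \<in> basis S \<Longrightarrow> r \<in> basis (X - S) \<Longrightarrow> r' \<in> basis (X - S)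
   \<Longrightarrow> agree (X - S) (join s r) (join t r') \<longleftrightarrow> r = r'"
proof -
  assume A: "s \<in> basis S" "t \<in> basis S" "r \<in> basis (X - S)" "r' \<in> basis (X - S)"
  have "agree (X - S) (join s r) (join t r') \<longleftrightarrow> (\<forall>q\<in>X - S. r q = r' q)"
  proof -
    have "\<And>q. q \<in> X - S \<Longrightarrow> \<not> s q \<and> \<not> t q" using A(1,2) unfolding basis_iff by blast
    then show ?thesis unfolding agree_def join_def by simp
  qed
  also have "\<dots> \<longleftrightarrow> r = r'"
  proof
    assume H: "\<forall>q\<in>X - S. r q = r' q"
    show "r = r'"
    proof
      fix q show "r q = r' q"
      proof (cases "q \<in> X - S")
        case True then show ?thesis using H by blast
      next
        case False then show ?thesis using A(3,4) unfolding basis_iff by blast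
      qed
    qed
  qed simp
  finally show ?thesis .
qed

lemma op_eq_join:
  assumes "S \<subseteq> X" "in_L X A" "in_L X B"
    and "\<And>s t r r'. s \<in> basis S \<Longrightarrow> t \<in> basis S \<Longrightarrow> r \<in> basis (X - S) \<Longrightarrow> r' \<in> basis (X - S)
          \<Longrightarrow> A (join s r) (join t r') = B (join s r) (join t r')"
  shows "A = B"
proof (intro ext)
  fix f g
  show "A f g = B f g"
  proof (cases "f \<in> basis X \<and> g \<in> basis X")
    case True
    then have "A (join (restr S f) (restr (X - S) f)) (join (restr S g) (restr (X - S) g))
             = B (join (restr S f) (restr (X - S) f)) (join (restr S g) (restr (X - S) g))"
      by (intro assms(4)) auto
    then show ?thesis using True join_restr_X[OF assms(1)] by simp
  next
    case False
    then show ?thesis using assms(2,3) by (auto simp: in_LD1 in_LD2)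
  qed
qed

lemma ext_in_L[simp]: "in_L X (ext S X A)"
  unfolding in_L_def ext_def by auto

lemma ext_join:
  assumes "S \<subseteq> X" "s \<in> basis S" "t \<in> basis S" "r \<in> basis (X - S)" "r' \<in> basis (X - S)"
  shows "ext S X A (join s r) (join t r') = (if r = r' then A s t else 0)"
  using assms by (simp add: ext_def join_basisX agree_join restr_join_S)

lemma sum_splitX:
  assumes "finite X" "S \<subseteq> X"
  shows "(\<Sum>f\<in>basis X. G f) = (\<Sum>s\<in>basis S. \<Sum>r\<in>basis (X - S). G (join s r))"
  by (rule sum_split'[OF assms])

lemma finite_basis_sub: "finite X \<Longrightarrow> finite (basis (X - S))"
  by (simp add: finite_basis)

lemma finite_basis_S: "finite X \<Longrightarrow> S \<subseteq> X \<Longrightarrow> finite (basis S)"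
  using finite_basis finite_subset by blast

lemma mult_ext:
  assumes F: "finite X" and SX: "S \<subseteq> X"
  shows "mult X (ext S X A) (ext S X B) = ext S X (mult S A B)"
proof (rule op_eq_join[OF SX])
  fix s t r r' assume st: "s \<in> basis S" "t \<in> basis S" "r \<in> basis (X - S)" "r' \<in> basis (X - S)"
  have "mult X (ext S X A) (ext S X B) (join s r) (join t r')
      = (\<Sum>u\<in>basis S. \<Sum>r''\<in>basis (X - S). ext S X A (join s r) (join u r'') * ext S X B (join u r'') (join t r'))"
    using st SX by (simp add: mult_in join_basisX sum_splitX[OF F SX])
  also have "\<dots> = (\<Sum>u\<in>basis S. \<Sum>r''\<in>basis (X - S). if r'' = r then (if r = r' then A s u * B u t else 0) else 0)"
    using st SX by (intro sum.cong refl) (auto simp: ext_join)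
  also have "\<dots> = (\<Sum>u\<in>basis S. if r = r' then A s u * B u t else 0)"
    using st F by (simp add: finite_basis_sub sum.delta)
  also have "\<dots> = ext S X (mult S A B) (join s r) (join t r')"
    using st SX by (simp add: ext_join mult_in)
  finally show "mult X (ext S X A) (ext S X B) (join s r) (join t r') = ext S X (mult S A B) (join s r) (join t r')" .
qed simp_all

lemma ext_idop:
  assumes SX: "S \<subseteq> X"
  shows "ext S X (idop S) = idop X"
proof (rule op_eq_join[OF SX])
  fix s t r r' assume st: "s \<in> basis S" "t \<in> basis S" "r \<in> basis (X - S)" "r' \<in> basis (X - S)"
  have "join s r = join t r' \<longleftrightarrow> s = t \<and> r = r'"
    using st by (metis restr_join_S restr_join_R)
  then show "ext S X (idop S) (join s r) (join t r') = idop X (join s r) (join t r')"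
    using st SX by (simp add: ext_join idop_def join_basisX)
qed simp_all

lemma ext_self: "in_L S A \<Longrightarrow> ext S S A = A"
  unfolding ext_def by (auto intro!: ext simp: agree_def restr_id in_LD1 in_LD2)

lemma ext_add: "ext S X (\<lambda>f g. A f g + B f g) = (\<lambda>f g. ext S X A f g + ext S X B f g)"
  unfolding ext_def by (auto intro!: ext)
lemma ext_diff: "ext S X (\<lambda>f g. A f g - B f g) = (\<lambda>f g. ext S X A f g - ext S X B f g)"
  unfolding ext_def by (auto intro!: ext)

lemma ext_proj:
  assumes F: "finite X" and SX: "S \<subseteq> X" and P: "is_proj S P"
  shows "is_proj X (ext S X P)"
proof -
  have M: "mult S P P = P" using proj_props[OF P] by simp
  have "mult X (ext S X P) (ext S X P) = ext S X P" using mult_ext[OF F SX] M by simp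
  moreover have "\<forall>f g. ext S X P f g = cnj (ext S X P g f)"
  proof (intro allI)
    fix f g
    show "ext S X P f g = cnj (ext S X P g f)"
    proof (cases "f \<in> basis X \<and> g \<in> basis X \<and> agree (X - S) f g")
      case True
      then have "agree (X - S) g f" unfolding agree_def by auto
      then show ?thesis using True unfolding ext_def by (simp add: proj_herm_apply[OF P, of "restr S f"])
    next
      case False
      then have "\<not> (g \<in> basis X \<and> f \<in> basis X \<and> agree (X - S) g f)" unfolding agree_def by auto
      then have "ext S X P g f = 0" unfolding ext_def by (subst if_not_P) auto
      moreover have "ext S X P f g = 0" using False unfolding ext_def by (subst if_not_P) auto
      ultimately show ?thesis by simp
    qed
  qed
  ultimately show ?thesis unfolding is_proj_def using ext_in_L by blast
qed

definition blk :: "qvar set \<Rightarrow> op \<Rightarrow> bstate \<Rightarrow> bstate \<Rightarrow> op" where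
  "blk S B r r' = (\<lambda>a b. if a \<in> basis S \<and> b \<in> basis S then B (join a r) (join b r') else 0)"

lemma blk_in_L[simp]: "in_L S (blk S B r r')"
  unfolding in_L_def blk_def by auto

lemma tr_ext_split:
  assumes F: "finite X" and SX: "S \<subseteq> X"
  shows "tr X (mult X (ext S X A) B) = (\<Sum>r\<in>basis (X - S). tr S (mult S A (blk S B r r)))"
proof -
  have "tr X (mult X (ext S X A) B)
      = (\<Sum>s\<in>basis S. \<Sum>r\<in>basis (X - S). \<Sum>t\<in>basis S. \<Sum>r'\<in>basis (X - S).
            ext S X A (join s r) (join t r') * B (join t r') (join s r))"
    unfolding tr_def using SX
    by (simp add: sum_splitX[OF F SX] mult_in join_basisX)
  also have "\<dots> = (\<Sum>s\<in>basis S. \<Sum>r\<in>basis (X - S). \<Sum>t\<in>basis S. \<Sum>r'\<in>basis (X - S).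
            if r' = r then A s t * B (join t r) (join s r) else 0)"
    using SX by (intro sum.cong refl) (auto simp: ext_join)
  also have "\<dots> = (\<Sum>s\<in>basis S. \<Sum>r\<in>basis (X - S). \<Sum>t\<in>basis S. A s t * B (join t r) (join s r))"
    using F by (simp add: finite_basis_sub sum.delta)
  also have "\<dots> = (\<Sum>r\<in>basis (X - S). \<Sum>s\<in>basis S. \<Sum>t\<in>basis S. A s t * B (join t r) (join s r))"
    by (rule sum.swap)
  also have "\<dots> = (\<Sum>r\<in>basis (X - S). tr S (mult S A (blk S B r r)))"
    unfolding tr_def by (intro sum.cong refl) (simp add: mult_in blk_def)
  finally show ?thesis .
qed

lemma tr_split:
  assumes F: "finite X" and SX: "S \<subseteq> X" and L: "in_L X B"
  shows "tr X B = (\<Sum>r\<in>basis (X - S). tr S (blk S B r r))"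
proof -
  have "tr X B = tr X (mult X (ext S X (idop S)) B)"
    using ext_idop[OF SX] mult_idop_left[OF F L] by simp
  also have "\<dots> = (\<Sum>r\<in>basis (X - S). tr S (mult S (idop S) (blk S B r r)))"
    by (rule tr_ext_split[OF F SX])
  also have "\<dots> = (\<Sum>r\<in>basis (X - S). tr S (blk S B r r))"
    using finite_subset[OF SX F] by (simp add: mult_idop_left)
  finally show ?thesis .
qed



lemma sum4_delta:
  assumes "finite B" "r \<in> B" "r' \<in> B"
  shows "(\<Sum>a\<in>A. \<Sum>r1\<in>B. \<Sum>b\<in>C. \<Sum>r2\<in>B. if r1 = r \<and> r2 = r' then G a b else 0) = (\<Sum>a\<in>A. \<Sum>b\<in>C. G a b)"
proof (intro sum.cong refl)
  fix a
  have "(\<Sum>r1\<in>B. \<Sum>b\<in>C. \<Sum>r2\<in>B. if r1 = r \<and> r2 = r' then G a b else 0)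
      = (\<Sum>r1\<in>B. \<Sum>b\<in>C. if r1 = r then G a b else 0)"
  proof (intro sum.cong refl)
    fix r1 b
    have "(\<Sum>r2\<in>B. if r1 = r \<and> r2 = r' then G a b else 0) = (\<Sum>r2\<in>B. if r2 = r' then (if r1 = r then G a b else 0) else 0)"
      by (intro sum.cong refl) auto
    also have "\<dots> = (if r1 = r then G a b else 0)" using assms by (simp add: sum.delta')
    finally show "(\<Sum>r2\<in>B. if r1 = r \<and> r2 = r' then G a b else 0) = (if r1 = r then G a b else 0)" .
  qed
  also have "\<dots> = (\<Sum>r1\<in>B. if r1 = r then (\<Sum>b\<in>C. G a b) else 0)"
    by (intro sum.cong refl) auto
  also have "\<dots> = (\<Sum>b\<in>C. G a b)" using assms by (simp add: sum.delta')
  finally show "(\<Sum>r1\<in>B. \<Sum>b\<in>C. \<Sum>r2\<in>B. if r1 = r \<and> r2 = r' then G a b else 0) = (\<Sum>b\<in>C. G a b)" .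
qed

lemma psd_blk:
  assumes F: "finite X" and SX: "S \<subseteq> X" and P: "psd X \<rho>" and r: "r \<in> basis (X - S)"
  shows "psd S (blk S \<rho> r r)"
  unfolding psd_iff
proof (intro conjI allI)
  fix v
  define w :: vec where "w = (\<lambda>f. if f \<in> basis X \<and> restr (X - S) f = r then v (restr S f) else 0)"
  have wj: "\<And>s r'. s \<in> basis S \<Longrightarrow> r' \<in> basis (X - S) \<Longrightarrow> w (join s r') = (if r' = r then v s else 0)"
    using SX by (auto simp: w_def join_basisX restr_join_S restr_join_R)
  have "sf X \<rho> w w = (\<Sum>s\<in>basis S. \<Sum>r1\<in>basis (X - S). \<Sum>t\<in>basis S. \<Sum>r2\<in>basis (X - S).
           cnj (w (join s r1)) * \<rho> (join s r1) (join t r2) * w (join t r2))"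
    unfolding sf_def by (simp add: sum_splitX[OF F SX])
  also have "\<dots> = (\<Sum>s\<in>basis S. \<Sum>r1\<in>basis (X - S). \<Sum>t\<in>basis S. \<Sum>r2\<in>basis (X - S).
           if r1 = r \<and> r2 = r then cnj (v s) * \<rho> (join s r) (join t r) * v t else 0)"
    by (intro sum.cong refl) (auto simp: wj)
  also have "\<dots> = (\<Sum>s\<in>basis S. \<Sum>t\<in>basis S. cnj (v s) * \<rho> (join s r) (join t r) * v t)"
    by (rule sum4_delta) (use F r finite_basis_sub in auto)
  also have "\<dots> = sf S (blk S \<rho> r r) v v"
    unfolding sf_def blk_def by (intro sum.cong refl) auto
  finally have "sf S (blk S \<rho> r r) v v = sf X \<rho> w w" by simp
  then show "0 \<le> sf S (blk S \<rho> r r) v v" using P by (simp add: psd_iff)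
qed simp



lemma restr_join_V: "V \<subseteq> S \<Longrightarrow> a \<in> basis S \<Longrightarrow> r \<in> basis (X - S) \<Longrightarrow> restr V (join a r) = restr V a"
  unfolding restr_def join_def basis_iff by (auto simp: fun_eq_iff)

lemma restr_restr: "V \<subseteq> S \<Longrightarrow> restr V (restr S f) = restr V f"
  unfolding restr_def by (auto simp: fun_eq_iff)

lemma agree_join2:
  assumes "V \<subseteq> S" "S \<subseteq> X" "s \<in> basis S" "a \<in> basis S" "r \<in> basis (X - S)" "r1 \<in> basis (X - S)"
  shows "agree (X - V) (join s r) (join a r1) \<longleftrightarrow> agree (S - V) s a \<and> r = r1"
proof -
  have "agree (X - V) (join s r) (join a r1) \<longleftrightarrow> agree (S - V) s a \<and> agree (X - S) (join s r) (join a r1)"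
    using assms unfolding agree_def join_def basis_iff by auto
  also have "agree (X - S) (join s r) (join a r1) \<longleftrightarrow> r = r1"
    using agree_join assms by blast
  finally show ?thesis .
qed

lemma ext_so_out: "\<not> (f \<in> basis X \<and> g \<in> basis X) \<Longrightarrow> ext_so V X E \<rho> f g = 0"
  unfolding ext_so_def by auto

lemma ext_so_in_L[simp]: "in_L X (ext_so V X E \<rho>)"
  unfolding in_L_def ext_so_def by auto

lemma ext_so_join:
  assumes F: "finite X" and VS: "V \<subseteq> S" and SX: "S \<subseteq> X"
    and st: "s \<in> basis S" "t \<in> basis S" "r \<in> basis (X - S)" "r' \<in> basis (X - S)"
  shows "ext_so V X E \<rho> (join s r) (join t r') = ext_so V S E (blk S \<rho> r r') s t"
proof -
  define K where "K a b = E (unit_op (restr V a) (restr V b)) (restr V s) (restr V t)" for a b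
  have "ext_so V X E \<rho> (join s r) (join t r')
     = (\<Sum>a\<in>basis S. \<Sum>r1\<in>basis (X - S). \<Sum>b\<in>basis S. \<Sum>r2\<in>basis (X - S).
         if agree (X - V) (join s r) (join a r1) \<and> agree (X - V) (join t r') (join b r2)
         then \<rho> (join a r1) (join b r2) * E (unit_op (restr V (join a r1)) (restr V (join b r2)))
               (restr V (join s r)) (restr V (join t r')) else 0)"
    unfolding ext_so_def using SX st by (simp add: join_basisX sum_splitX[OF F SX])
  also have "\<dots> = (\<Sum>a\<in>basis S. \<Sum>r1\<in>basis (X - S). \<Sum>b\<in>basis S. \<Sum>r2\<in>basis (X - S).
         if r1 = r \<and> r2 = r' then (if agree (S - V) s a \<and> agree (S - V) t b then \<rho> (join a r) (join b r') * K a b else 0) else 0)"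
    using VS SX st by (intro sum.cong refl) (auto simp: agree_join2 restr_join_V K_def)
  also have "\<dots> = (\<Sum>a\<in>basis S. \<Sum>b\<in>basis S.
         if agree (S - V) s a \<and> agree (S - V) t b then \<rho> (join a r) (join b r') * K a b else 0)"
    by (rule sum4_delta) (use F st finite_basis_sub in auto)
  also have "\<dots> = ext_so V S E (blk S \<rho> r r') s t"
    unfolding ext_so_def K_def using st by (auto simp: blk_def intro!: sum.cong)
  finally show ?thesis .
qed

lemma blk_ext_so:
  assumes F: "finite X" and VS: "V \<subseteq> S" and SX: "S \<subseteq> X" and r: "r \<in> basis (X - S)" "r' \<in> basis (X - S)"
  shows "blk S (ext_so V X E \<rho>) r r' = ext_so V S E (blk S \<rho> r r')"
proof (intro ext)
  fix a b
  show "blk S (ext_so V X E \<rho>) r r' a b = ext_so V S E (blk S \<rho> r r') a b"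
  proof (cases "a \<in> basis S \<and> b \<in> basis S")
    case True
    then show ?thesis using ext_so_join[OF F VS SX _ _ r] by (simp add: blk_def)
  next
    case False
    then show ?thesis by (auto simp: blk_def ext_so_out)
  qed
qed

lemma DProg_L: "DProg V E \<Longrightarrow> in_L V A \<Longrightarrow> in_L V (E A)"
  unfolding DProg_def by (drule conjunct1) blast

lemma DProg_lin: "DProg V E \<Longrightarrow> in_L V A \<Longrightarrow> in_L V B \<Longrightarrow>
    E (\<lambda>f g. c * A f g + B f g) = (\<lambda>f g. c * E A f g + E B f g)"
  unfolding DProg_def by (drule conjunct2, drule conjunct1) blast

lemma DProg_cp: "DProg V E \<Longrightarrow> finite X \<Longrightarrow> V \<subseteq> X \<Longrightarrow> psd X \<rho> \<Longrightarrow> psd X (ext_so V X E \<rho>)"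
  unfolding DProg_def by (drule conjunct2, drule conjunct2, drule conjunct1) blast

lemma DProg_tr: "DProg V E \<Longrightarrow> psd V \<rho> \<Longrightarrow> Re (tr V (E \<rho>)) \<le> Re (tr V \<rho>)"
  unfolding DProg_def by (drule conjunct2, drule conjunct2, drule conjunct2) blast

lemma DProg_zero: "DProg V E \<Longrightarrow> E (\<lambda>f g. 0) = (\<lambda>f g. 0)"
proof -
  assume D: "DProg V E"
  have L: "in_L V (\<lambda>f g. 0)" unfolding in_L_def by simp
  have "E (\<lambda>f g. (-1) * (\<lambda>f g. 0::complex) f g + (\<lambda>f g. 0) f g) = (\<lambda>f g. (-1) * E (\<lambda>f g. 0) f g + E (\<lambda>f g. 0) f g)"
    using DProg_lin[OF D L L] .
  then show ?thesis by simp
qed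

lemma in_L_sum: "(\<And>p. p \<in> T \<Longrightarrow> in_L V (U p)) \<Longrightarrow> in_L V (\<lambda>f g. \<Sum>p\<in>T. c p * U p f g)"
  unfolding in_L_def by auto

lemma DProg_sum:
  assumes D: "DProg V E" and T: "finite T" and U: "\<And>p. p \<in> T \<Longrightarrow> in_L V (U p)"
  shows "E (\<lambda>f g. \<Sum>p\<in>T. c p * U p f g) = (\<lambda>f g. \<Sum>p\<in>T. c p * E (U p) f g)"
  using T U
proof (induction T rule: finite_induct)
  case empty
  then show ?case using DProg_zero[OF D] by simp
next
  case (insert p T)
  have lin: "\<And>A B c. in_L V A \<Longrightarrow> in_L V B \<Longrightarrow> E (\<lambda>f g. c * A f g + B f g) = (\<lambda>f g. c * E A f g + E B f g)"
    using DProg_lin[OF D] by blast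
  have "E (\<lambda>f g. \<Sum>q\<in>insert p T. c q * U q f g) = E (\<lambda>f g. c p * U p f g + (\<lambda>f g. \<Sum>q\<in>T. c q * U q f g) f g)"
    using insert by simp
  also have "\<dots> = (\<lambda>f g. c p * E (U p) f g + E (\<lambda>f g. \<Sum>q\<in>T. c q * U q f g) f g)"
  proof (rule lin)
    show "in_L V (U p)" using insert.prems by auto
    show "in_L V (\<lambda>f g. \<Sum>q\<in>T. c q * U q f g)" by (rule in_L_sum) (use insert.prems in auto)
  qed
  also have "\<dots> = (\<lambda>f g. \<Sum>q\<in>insert p T. c q * E (U q) f g)"
    using insert by simp
  finally show ?case .
qed

lemma unit_op_in_L: "a \<in> basis V \<Longrightarrow> b \<in> basis V \<Longrightarrow> in_L V (unit_op a b)"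
  unfolding in_L_def unit_op_def by auto

lemma op_decomp:
  assumes F: "finite V" and L: "in_L V \<sigma>"
  shows "\<sigma> = (\<lambda>f g. \<Sum>p\<in>basis V \<times> basis V. \<sigma> (fst p) (snd p) * unit_op (fst p) (snd p) f g)"
proof (intro ext)
  fix f g
  have "(\<Sum>p\<in>basis V \<times> basis V. \<sigma> (fst p) (snd p) * unit_op (fst p) (snd p) f g)
      = (\<Sum>p\<in>basis V \<times> basis V. if p = (f, g) then \<sigma> f g else 0)"
    by (intro sum.cong refl) (auto simp: unit_op_def)
  also have "\<dots> = (if (f, g) \<in> basis V \<times> basis V then \<sigma> f g else 0)"
    using F finite_basis by (simp add: sum.delta')
  also have "\<dots> = \<sigma> f g"
  proof (cases "(f, g) \<in> basis V \<times> basis V")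
    case False
    then have "f \<notin> basis V \<or> g \<notin> basis V" by auto
    then have "\<sigma> f g = 0" using L in_LD1 in_LD2 by metis
    then show ?thesis by simp
  qed simp
  finally show "\<sigma> f g = (\<Sum>p\<in>basis V \<times> basis V. \<sigma> (fst p) (snd p) * unit_op (fst p) (snd p) f g)" by simp
qed

lemma ext_so_self:
  assumes F: "finite V" and D: "DProg V E" and L: "in_L V \<sigma>"
  shows "ext_so V V E \<sigma> = E \<sigma>"
proof (intro ext)
  fix f g
  have LE: "in_L V (E \<sigma>)" using DProg_L[OF D L] .
  have Esum: "E \<sigma> = (\<lambda>f g. \<Sum>p\<in>basis V \<times> basis V. \<sigma> (fst p) (snd p) * E (unit_op (fst p) (snd p)) f g)"
    apply (subst op_decomp[OF F L])
    apply (rule DProg_sum[OF D])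
    using F finite_basis unit_op_in_L by auto
  show "ext_so V V E \<sigma> f g = E \<sigma> f g"
  proof (cases "f \<in> basis V \<and> g \<in> basis V")
    case True
    have "ext_so V V E \<sigma> f g = (\<Sum>a\<in>basis V. \<Sum>b\<in>basis V. \<sigma> a b * E (unit_op a b) f g)"
      unfolding ext_so_def using True by (simp add: agree_def restr_id cong: sum.cong)
    also have "\<dots> = E \<sigma> f g"
      by (subst Esum) (simp add: sum.cartesian_product split_def)
    finally show ?thesis .
  next
    case False
    then show ?thesis using LE by (auto simp: ext_so_out in_LD1 in_LD2)
  qed
qed

lemma blk_ext_so_V:
  assumes F: "finite X" and D: "DProg V E" and VX: "V \<subseteq> X" and r: "r \<in> basis (X - V)"
  shows "blk V (ext_so V X E \<rho>) r r = E (blk V \<rho> r r)"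
  using blk_ext_so[OF F order_refl VX r r] ext_so_self[OF finite_subset[OF VX F] D] by simp

lemma DProg_psdV: "DProg V E \<Longrightarrow> finite V \<Longrightarrow> psd V \<rho> \<Longrightarrow> psd V (E \<rho>)"
  using DProg_cp[of V E V \<rho>] ext_so_self[of V E \<rho>] by (simp add: psd_iff)

lemma tr_nonincr:
  assumes F: "finite X" and D: "DProg V E" and VX: "V \<subseteq> X" and P: "psd X \<rho>"
  shows "tr X (ext_so V X E \<rho>) \<le> tr X \<rho>"
proof -
  have FV: "finite V" using finite_subset[OF VX F] .
  have L: "in_L X \<rho>" using P by (simp add: psd_iff)
  have "tr X (ext_so V X E \<rho>) = (\<Sum>r\<in>basis (X - V). tr V (blk V (ext_so V X E \<rho>) r r))"
    by (rule tr_split[OF F VX]) simp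
  also have "\<dots> = (\<Sum>r\<in>basis (X - V). tr V (E (blk V \<rho> r r)))"
    by (intro sum.cong refl) (simp add: blk_ext_so_V[OF F D VX])
  also have "\<dots> \<le> (\<Sum>r\<in>basis (X - V). tr V (blk V \<rho> r r))"
  proof (rule sum_mono)
    fix r assume r: "r \<in> basis (X - V)"
    have pb: "psd V (blk V \<rho> r r)" by (rule psd_blk[OF F VX P r])
    have pe: "psd V (E (blk V \<rho> r r))" by (rule DProg_psdV[OF D FV pb])
    have "Re (tr V (E (blk V \<rho> r r))) \<le> Re (tr V (blk V \<rho> r r))"
      using DProg_tr[OF D pb] .
    moreover have "Im (tr V (E (blk V \<rho> r r))) = 0" "Im (tr V (blk V \<rho> r r)) = 0"
      using tr_psd[OF FV pe] tr_psd[OF FV pb] by (auto simp: nonneg_complex_iff)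
    ultimately show "tr V (E (blk V \<rho> r r)) \<le> tr V (blk V \<rho> r r)"
      by (simp add: less_eq_complex_def)
  qed
  also have "\<dots> = tr X \<rho>" by (rule tr_split[OF F VX L, symmetric])
  finally show ?thesis .
qed

lemma sum_swap4:
  "(\<Sum>f\<in>A. \<Sum>h\<in>B. \<Sum>a\<in>C. \<Sum>b\<in>D. F f h a b) = (\<Sum>a\<in>C. \<Sum>b\<in>D. \<Sum>f\<in>A. \<Sum>h\<in>B. F f h a b)"
proof -
  have "(\<Sum>f\<in>A. \<Sum>h\<in>B. \<Sum>a\<in>C. \<Sum>b\<in>D. F f h a b) = (\<Sum>f\<in>A. \<Sum>a\<in>C. \<Sum>h\<in>B. \<Sum>b\<in>D. F f h a b)"
    by (rule sum.cong[OF refl], rule sum.swap)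
  also have "\<dots> = (\<Sum>f\<in>A. \<Sum>a\<in>C. \<Sum>b\<in>D. \<Sum>h\<in>B. F f h a b)"
    by (rule sum.cong[OF refl], rule sum.cong[OF refl], rule sum.swap)
  also have "\<dots> = (\<Sum>a\<in>C. \<Sum>f\<in>A. \<Sum>b\<in>D. \<Sum>h\<in>B. F f h a b)"
    by (rule sum.swap)
  also have "\<dots> = (\<Sum>a\<in>C. \<Sum>b\<in>D. \<Sum>f\<in>A. \<Sum>h\<in>B. F f h a b)"
    by (rule sum.cong[OF refl], rule sum.swap)
  finally show ?thesis .
qed

definition Mop :: "qvar set \<Rightarrow> qvar set \<Rightarrow> superop \<Rightarrow> op \<Rightarrow> op" where
  "Mop V S E Q = (\<lambda>b a. if a \<in> basis S \<and> b \<in> basis S then tr S (mult S Q (ext_so V S E (unit_op a b))) else 0)"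

lemma Mop_in_L[simp]: "in_L S (Mop V S E Q)"
  unfolding in_L_def Mop_def by auto

lemma ext_so_decomp:
  assumes F: "finite S"
  shows "ext_so V S E \<sigma> = (\<lambda>f g. \<Sum>a\<in>basis S. \<Sum>b\<in>basis S. \<sigma> a b * ext_so V S E (unit_op a b) f g)"
proof (intro ext)
  fix f g
  show "ext_so V S E \<sigma> f g = (\<Sum>a\<in>basis S. \<Sum>b\<in>basis S. \<sigma> a b * ext_so V S E (unit_op a b) f g)"
  proof (cases "f \<in> basis S \<and> g \<in> basis S")
    case True
    define K where "K a b = E (unit_op (restr V a) (restr V b)) (restr V f) (restr V g)" for a b
    have u: "\<And>a b. a \<in> basis S \<Longrightarrow> b \<in> basis S \<Longrightarrow> ext_so V S E (unit_op a b) f g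
       = (if agree (S - V) f a \<and> agree (S - V) g b then K a b else 0)"
    proof -
      fix a b assume ab: "a \<in> basis S" "b \<in> basis S"
      have "ext_so V S E (unit_op a b) f g = (\<Sum>f'\<in>basis S. \<Sum>g'\<in>basis S.
          if g' = b then (if f' = a then (if agree (S - V) f a \<and> agree (S - V) g b then K a b else 0) else 0) else 0)"
        unfolding ext_so_def K_def using True by (auto simp: unit_op_def intro!: sum.cong)
      also have "\<dots> = (if agree (S - V) f a \<and> agree (S - V) g b then K a b else 0)"
        using F ab finite_basis by (simp add: sum.delta')
      finally show "ext_so V S E (unit_op a b) f g = (if agree (S - V) f a \<and> agree (S - V) g b then K a b else 0)" .
    qed
    have "(\<Sum>a\<in>basis S. \<Sum>b\<in>basis S. \<sigma> a b * ext_so V S E (unit_op a b) f g)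
        = (\<Sum>a\<in>basis S. \<Sum>b\<in>basis S. \<sigma> a b * (if agree (S - V) f a \<and> agree (S - V) g b then K a b else 0))"
      by (intro sum.cong refl) (simp add: u)
    also have "\<dots> = ext_so V S E \<sigma> f g"
      unfolding ext_so_def K_def using True by (auto intro!: sum.cong)
    finally show ?thesis by simp
  qed (simp add: ext_so_out)
qed

lemma tr_Mop_S:
  assumes F: "finite S"
  shows "tr S (mult S Q (ext_so V S E \<sigma>)) = tr S (mult S (Mop V S E Q) \<sigma>)"
proof -
  have "tr S (mult S Q (ext_so V S E \<sigma>))
      = (\<Sum>f\<in>basis S. \<Sum>h\<in>basis S. Q f h * (\<Sum>a\<in>basis S. \<Sum>b\<in>basis S. \<sigma> a b * ext_so V S E (unit_op a b) h f))"
    unfolding tr_def by (subst ext_so_decomp[OF F]) (simp add: mult_in)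
  also have "\<dots> = (\<Sum>a\<in>basis S. \<Sum>b\<in>basis S. \<sigma> a b * (\<Sum>f\<in>basis S. \<Sum>h\<in>basis S. Q f h * ext_so V S E (unit_op a b) h f))"
  proof -
    have "(\<Sum>f\<in>basis S. \<Sum>h\<in>basis S. Q f h * (\<Sum>a\<in>basis S. \<Sum>b\<in>basis S. \<sigma> a b * ext_so V S E (unit_op a b) h f))
        = (\<Sum>f\<in>basis S. \<Sum>h\<in>basis S. \<Sum>a\<in>basis S. \<Sum>b\<in>basis S. \<sigma> a b * (Q f h * ext_so V S E (unit_op a b) h f))"
      by (simp add: sum_distrib_left mult_ac)
    also have "\<dots> = (\<Sum>a\<in>basis S. \<Sum>b\<in>basis S. \<Sum>f\<in>basis S. \<Sum>h\<in>basis S. \<sigma> a b * (Q f h * ext_so V S E (unit_op a b) h f))"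
      by (rule sum_swap4)
    also have "\<dots> = (\<Sum>a\<in>basis S. \<Sum>b\<in>basis S. \<sigma> a b * (\<Sum>f\<in>basis S. \<Sum>h\<in>basis S. Q f h * ext_so V S E (unit_op a b) h f))"
      by (simp add: sum_distrib_left)
    finally show ?thesis .
  qed
  also have "\<dots> = (\<Sum>a\<in>basis S. \<Sum>b\<in>basis S. \<sigma> a b * Mop V S E Q b a)"
    by (intro sum.cong refl) (simp add: Mop_def tr_def mult_in)
  also have "\<dots> = (\<Sum>b\<in>basis S. \<Sum>a\<in>basis S. Mop V S E Q b a * \<sigma> a b)"
    by (subst sum.swap) (simp add: mult.commute)
  also have "\<dots> = tr S (mult S (Mop V S E Q) \<sigma>)"
    unfolding tr_def by (simp add: mult_in)
  finally show ?thesis .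
qed

lemma tr_Mop:
  assumes F: "finite X" and VS: "V \<subseteq> S" and SX: "S \<subseteq> X"
  shows "tr X (mult X (ext S X Q) (ext_so V X E \<rho>)) = tr X (mult X (ext S X (Mop V S E Q)) \<rho>)"
proof -
  have FS: "finite S" using finite_subset[OF SX F] .
  have "tr X (mult X (ext S X Q) (ext_so V X E \<rho>)) = (\<Sum>r\<in>basis (X - S). tr S (mult S Q (blk S (ext_so V X E \<rho>) r r)))"
    by (rule tr_ext_split[OF F SX])
  also have "\<dots> = (\<Sum>r\<in>basis (X - S). tr S (mult S Q (ext_so V S E (blk S \<rho> r r))))"
    by (intro sum.cong refl) (simp add: blk_ext_so[OF F VS SX])
  also have "\<dots> = (\<Sum>r\<in>basis (X - S). tr S (mult S (Mop V S E Q) (blk S \<rho> r r)))"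
    by (intro sum.cong refl) (rule tr_Mop_S[OF FS])
  also have "\<dots> = tr X (mult X (ext S X (Mop V S E Q)) \<rho>)"
    by (rule tr_ext_split[OF F SX, symmetric])
  finally show ?thesis .
qed



lemma sf_outer_tr: "tr S (mult S A (outer S v v)) = sf S A v v"
proof -
  have "tr S (mult S A (outer S v v)) = (\<Sum>f\<in>basis S. \<Sum>h\<in>basis S. cnj (v f) * A f h * v h)"
    unfolding tr_def by (intro sum.cong refl) (simp add: mult_in outer_def mult_ac)
  then show ?thesis unfolding sf_def by simp
qed

lemma outer_psd: "psd S (outer S v v)"
  unfolding psd_iff
proof (intro conjI allI)
  show "in_L S (outer S v v)" unfolding in_L_def outer_def by auto
  fix w
  define z where "z = (\<Sum>a\<in>basis S. cnj (w a) * v a)"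
  have "sf S (outer S v v) w w = (\<Sum>a\<in>basis S. \<Sum>b\<in>basis S. (cnj (w a) * v a) * cnj (cnj (w b) * v b))"
    unfolding sf_def outer_def by (intro sum.cong refl) (simp add: mult_ac)
  also have "\<dots> = z * cnj z" unfolding z_def by (simp add: cnj_sum sum_product)
  finally show "0 \<le> sf S (outer S v v) w w"
    by (simp add: nonneg_complex_iff complex_mult_cnj)
qed

lemma tr_outer: "tr S (outer S v v) = ip S v v"
  unfolding tr_def outer_def ip_def by (simp add: mult.commute)

lemma sf_diff: "sf S (\<lambda>f g. A f g - B f g) u w = sf S A u w - sf S B u w"
  unfolding sf_def by (simp add: algebra_simps sum_subtractf)

lemma idop_row: "finite S \<Longrightarrow> f \<in> basis S \<Longrightarrow> (\<Sum>g\<in>basis S. idop S f g * v g) = v f"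
proof -
  assume F: "finite S" "f \<in> basis S"
  have "(\<Sum>g\<in>basis S. idop S f g * v g) = (\<Sum>g\<in>basis S. if g = f then v f else 0)"
    by (intro sum.cong refl) (auto simp: idop_def)
  also have "\<dots> = v f" using F finite_basis by (simp add: sum.delta')
  finally show ?thesis .
qed

lemma apply_idop: "finite S \<Longrightarrow> supp_vec S v \<Longrightarrow> apply_op S (idop S) v = v"
  by (rule ext) (auto simp: apply_op_def idop_row supp_vec_def)

lemma sf_idop: "finite S \<Longrightarrow> sf S (idop S) v v = ip S v v"
proof -
  assume F: "finite S"
  have "sf S (idop S) v v = ip S v (apply_op S (idop S) v)" by (rule sf_ip)
  also have "\<dots> = ip S v v" unfolding ip_def apply_op_def
    by (intro sum.cong refl) (simp add: idop_row[OF F])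
  finally show ?thesis .
qed

lemma apply_ident_minus: "finite S \<Longrightarrow> supp_vec S v \<Longrightarrow> apply_op S (ident_minus S M) v = (\<lambda>f. v f - apply_op S M v f)"
proof -
  assume F: "finite S" "supp_vec S v"
  have "apply_op S (ident_minus S M) v = (\<lambda>f. apply_op S (idop S) v f - apply_op S M v f)"
    unfolding ident_minus_def apply_op_def by (auto intro!: ext simp: left_diff_distrib sum_subtractf)
  then show ?thesis using apply_idop[OF F] by simp
qed

lemma sf_ident_minus: "finite S \<Longrightarrow> sf S (ident_minus S M) v v = ip S v v - sf S M v v"
  unfolding ident_minus_def by (simp add: sf_diff sf_idop)

lemma img_mult_gen:
  assumes "finite X" "is_proj X A" "img X A \<subseteq> img X B"
  shows "mult X B A = A"
proof (intro ext)
  fix f g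
  have LA: "in_L X A" using proj_props[OF assms(2)] by simp
  show "mult X B A f g = A f g"
  proof (cases "f \<in> basis X \<and> g \<in> basis X")
    case True
    have "col A g \<in> img X B" using col_img[OF assms(2)] assms(3) by blast
    then have "apply_op X B (col A g) f = col A g f" unfolding img_def by simp
    then show ?thesis using True by (simp add: apply_op_def col_def mult_in)
  next
    case False
    then show ?thesis using LA by (auto simp: mult_out in_LD1 in_LD2)
  qed
qed

lemma psd_herm_op: "finite S \<Longrightarrow> psd S C \<Longrightarrow> adj C = C"
  unfolding adj_def by (intro ext) (metis psd_herm)

lemma idm_herm: "finite S \<Longrightarrow> psd S (ident_minus S M) \<Longrightarrow> adj M = M"
proof -
  assume F: "finite S" and P: "psd S (ident_minus S M)"
  have h: "\<And>f g. ident_minus S M f g = cnj (ident_minus S M g f)" using psd_herm[OF F P] by blast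
  show "adj M = M"
  proof (intro ext)
    fix f g
    have "idop S f g - M f g = cnj (idop S g f - M g f)" using h[of f g] unfolding ident_minus_def .
    moreover have "cnj (idop S g f) = idop S f g" unfolding idop_def by auto
    ultimately show "adj M f g = M f g" unfolding adj_def by simp
  qed
qed

lemma satM:
  assumes F: "finite S" and VS: "V \<subseteq> S" and P: "is_proj S P" and LMS: "in_L S M"
    and H1: "\<And>X \<rho>. finite X \<Longrightarrow> S \<subseteq> X \<Longrightarrow> in_L X \<rho> \<Longrightarrow> T X \<rho> = tr X (mult X (ext S X M) \<rho>)"
    and H2: "\<And>X \<sigma>. finite X \<Longrightarrow> S \<subseteq> X \<Longrightarrow> psd X \<sigma> \<Longrightarrow> 0 \<le> Re (T X \<sigma>)"
    and H3: "psd S (ident_minus S M)"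
  shows "(\<forall>X \<rho>. finite X \<longrightarrow> V \<union> S \<subseteq> X \<longrightarrow> dens X \<rho> \<longrightarrow>
            Re (tr X (mult X (ext S X P) \<rho>)) \<le> Re (T X \<rho>)) \<longleftrightarrow> img S P \<subseteq> img S M"
proof
  assume sat: "\<forall>X \<rho>. finite X \<longrightarrow> V \<union> S \<subseteq> X \<longrightarrow> dens X \<rho> \<longrightarrow>
            Re (tr X (mult X (ext S X P) \<rho>)) \<le> Re (T X \<rho>)"
  show "img S P \<subseteq> img S M"
  proof
    fix v assume v: "v \<in> img S P"
    then have sv: "supp_vec S v" and Pv: "apply_op S P v = v" unfolding img_def by auto
    show "v \<in> img S M"
    proof (cases "v = (\<lambda>f. 0)")
      case True
      then show ?thesis using img_subsp[of S M] unfolding subsp_def by simp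
    next
      case False
      define c where "c = ip S v v"
      have cpos: "0 < Re c" using ip_pos[OF F sv False] by (simp add: c_def)
      have cim: "Im c = 0" using ip_real by (simp add: c_def)
      have c0: "c \<noteq> 0" using cpos by auto
      define \<rho> where "\<rho> = (\<lambda>f g. (1 / c) * outer S v v f g)"
      have Lr: "in_L S \<rho>" unfolding \<rho>_def in_L_def outer_def by auto
      have psdr: "psd S \<rho>" unfolding psd_iff
      proof (intro conjI allI)
        fix w
        have "sf S \<rho> w w = (1 / c) * sf S (outer S v v) w w"
          unfolding \<rho>_def sf_def by (simp add: sum_distrib_left mult_ac)
        moreover have "0 \<le> 1 / c" using cpos cim by (simp add: nonneg_complex_iff Re_divide Im_divide)
        moreover have "0 \<le> sf S (outer S v v) w w" using outer_psd by (simp add: psd_iff)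
        ultimately show "0 \<le> sf S \<rho> w w" by (metis mult_nonneg_nonneg)
      qed (rule Lr)
      have trr: "tr S \<rho> = 1" unfolding \<rho>_def tr_scale tr_outer using c0 by (simp add: c_def)
      have dens: "dens S \<rho>" unfolding dens_def using psdr trr by simp
      have LP: "in_L S P" using proj_props[OF P] by simp
      have "Re (tr S (mult S (ext S S P) \<rho>)) \<le> Re (T S \<rho>)" using sat F VS dens by blast
      moreover have "tr S (mult S (ext S S P) \<rho>) = 1"
      proof -
        have "tr S (mult S (ext S S P) \<rho>) = (1 / c) * sf S P v v"
          unfolding \<rho>_def ext_self[OF LP] mult_scale_right tr_scale sf_outer_tr ..
        also have "sf S P v v = c" using Pv by (simp add: sf_ip c_def)
        finally show ?thesis using c0 by simp
      qed
      moreover have "T S \<rho> = (1 / c) * sf S M v v"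
        using H1[OF F order_refl Lr] unfolding \<rho>_def ext_self[OF LMS] mult_scale_right tr_scale sf_outer_tr .
      ultimately have "1 \<le> Re ((1 / c) * sf S M v v)" by simp
      then have "(Re c)\<^sup>2 \<le> Re c * Re (sf S M v v)" using cpos cim
        by (simp add: Re_divide field_simps complex_eq_iff)
      then have ge: "Re c \<le> Re (sf S M v v)" using cpos
        by (simp add: power2_eq_square mult_le_cancel_left_pos)
      have "0 \<le> sf S (ident_minus S M) v v" using H3 by (simp add: psd_iff)
      then have "0 \<le> c - sf S M v v" using sf_ident_minus[OF F] by (simp add: c_def)
      then have "sf S (ident_minus S M) v v = 0" using ge cim sf_ident_minus[OF F, of M v]
        by (simp add: less_eq_complex_def complex_eq_iff c_def)
      then have "apply_op S (ident_minus S M) v = (\<lambda>f. 0)" by (rule psd_kernel[OF F H3])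
      then have "apply_op S M v = v" using apply_ident_minus[OF F sv] by (auto simp: fun_eq_iff)
      then show ?thesis using sv unfolding img_def by simp
    qed
  qed
next
  assume inc: "img S P \<subseteq> img S M"
  have MP: "mult S M P = P" by (rule img_mult_gen[OF F P inc])
  have aM: "adj M = M" by (rule idm_herm[OF F H3])
  have aP: "adj P = P" by (rule proj_herm[OF P])
  have PM: "mult S P M = P"
  proof -
    have "mult S P M = adj (mult S M P)" using adj_mult[of S M P] aM aP by simp
    then show ?thesis using MP aP by simp
  qed
  show "\<forall>X \<rho>. finite X \<longrightarrow> V \<union> S \<subseteq> X \<longrightarrow> dens X \<rho> \<longrightarrow>
            Re (tr X (mult X (ext S X P) \<rho>)) \<le> Re (T X \<rho>)"
  proof (intro allI impI)
    fix X \<rho> assume FX: "finite X" and SX': "V \<union> S \<subseteq> X" and D: "dens X \<rho>"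
    have SX: "S \<subseteq> X" using SX' by blast
    have pr: "psd X \<rho>" using D unfolding dens_def by simp
    have Lr: "in_L X \<rho>" using pr by (simp add: psd_iff)
    define Pt where "Pt = ext S X P"
    define Mt where "Mt = ext S X M"
    define Qt where "Qt = ident_minus X Pt"
    have PtP: "is_proj X Pt" unfolding Pt_def by (rule ext_proj[OF FX SX P])
    have QtP: "is_proj X Qt" unfolding Qt_def by (rule ident_minus_proj[OF FX PtP])
    have LM: "in_L X Mt" unfolding Mt_def by simp
    have LP: "in_L X Pt" unfolding Pt_def by simp
    have MtPt: "mult X Mt Pt = Pt" unfolding Mt_def Pt_def using mult_ext[OF FX SX, of M P] MP by simp
    have PtMt: "mult X Pt Mt = Pt" unfolding Mt_def Pt_def using mult_ext[OF FX SX, of P M] PM by simp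
    have PtPt: "mult X Pt Pt = Pt" using proj_props[OF PtP] by simp
    have QM: "mult X Qt Mt = (\<lambda>f g. Mt f g - Pt f g)"
      unfolding Qt_def ident_minus_def by (simp add: mult_diff_left mult_idop_left[OF FX LM] PtMt)
    have QMQ: "mult X (mult X Qt Mt) Qt = (\<lambda>f g. Mt f g - Pt f g)"
      apply (subst QM)
      unfolding Qt_def ident_minus_def
      by (simp add: mult_diff_left mult_diff_right mult_idop_right[OF FX LM] mult_idop_right[OF FX LP] MtPt PtPt)
    have Mdec: "Mt = (\<lambda>f g. Pt f g + mult X (mult X Qt Mt) Qt f g)" unfolding QMQ by simp
    define \<sigma> where "\<sigma> = mult X (mult X Qt \<rho>) Qt"
    have ps: "psd X \<sigma>" unfolding \<sigma>_def using psd_sandwich[OF FX pr, of Qt] proj_herm[OF QtP] by simp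
    have Ls: "in_L X \<sigma>" unfolding \<sigma>_def by simp
    have "tr X (mult X (mult X (mult X Qt Mt) Qt) \<rho>) = tr X (mult X Qt (mult X Mt (mult X Qt \<rho>)))"
      by (simp add: mult_assoc)
    also have "\<dots> = tr X (mult X (mult X Mt (mult X Qt \<rho>)) Qt)" by (rule tr_mult_comm)
    also have "\<dots> = tr X (mult X Mt \<sigma>)" unfolding \<sigma>_def by (simp add: mult_assoc)
    finally have e1: "tr X (mult X (mult X (mult X Qt Mt) Qt) \<rho>) = tr X (mult X Mt \<sigma>)" .
    have "T X \<rho> = tr X (mult X Mt \<rho>)" unfolding Mt_def by (rule H1[OF FX SX Lr])
    also have "\<dots> = tr X (mult X Pt \<rho>) + tr X (mult X (mult X (mult X Qt Mt) Qt) \<rho>)"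
      by (subst Mdec) (simp add: mult_add_left tr_add)
    also have "\<dots> = tr X (mult X Pt \<rho>) + T X \<sigma>"
      using e1 H1[OF FX SX Ls] unfolding Mt_def by simp
    finally have "Re (T X \<rho>) = Re (tr X (mult X Pt \<rho>)) + Re (T X \<sigma>)" by simp
    moreover have "0 \<le> Re (T X \<sigma>)" by (rule H2[OF FX SX ps])
    ultimately show "Re (tr X (mult X (ext S X P) \<rho>)) \<le> Re (T X \<rho>)" unfolding Pt_def by simp
  qed
qed



definition Mp :: "qvar set \<Rightarrow> qvar set \<Rightarrow> superop \<Rightarrow> op \<Rightarrow> op" where
  "Mp V S E Q = (\<lambda>f g. Mop V S E Q f g + idop S f g - Mop V S E (idop S) f g)"

lemma Mp_in_L[simp]: "in_L S (Mp V S E Q)"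
  unfolding in_L_def Mp_def Mop_def idop_def by auto

lemma idop_proj: "finite S \<Longrightarrow> is_proj S (idop S)"
proof -
  assume F: "finite S"
  have "mult S (idop S) (idop S) = idop S" by (rule mult_idop_left[OF F idop_in_L])
  moreover have "\<forall>f g. idop S f g = cnj (idop S g f)" by (simp add: idop_def)
  ultimately show ?thesis unfolding is_proj_def using idop_in_L by blast
qed

lemma ident_minus_in_L: "in_L S M \<Longrightarrow> in_L S (ident_minus S M)"
  unfolding in_L_def ident_minus_def idop_def by auto

lemma sfMop: "finite S \<Longrightarrow> sf S (Mop V S E Q) v v = tr S (mult S Q (ext_so V S E (outer S v v)))"
  by (simp add: sf_outer_tr[symmetric] tr_Mop_S)

lemma psd_ext_so_S:
  assumes F: "finite S" and VS: "V \<subseteq> S" and D: "DProg V E"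
  shows "psd S (ext_so V S E (outer S v v))"
  by (rule DProg_cp[OF D F VS outer_psd])

lemma trPhi_le: 
  assumes F: "finite S" and VS: "V \<subseteq> S" and D: "DProg V E"
  shows "tr S (ext_so V S E (outer S v v)) \<le> ip S v v"
  using tr_nonincr[OF F D VS outer_psd] tr_outer by simp

lemma H3tot:
  assumes F: "finite S" and VS: "V \<subseteq> S" and D: "DProg V E" and Q: "is_proj S Q"
  shows "psd S (ident_minus S (Mop V S E Q))"
  unfolding psd_iff
proof (intro conjI allI)
  show "in_L S (ident_minus S (Mop V S E Q))" by (simp add: ident_minus_in_L)
  fix v
  have "tr S (mult S Q (ext_so V S E (outer S v v))) \<le> tr S (ext_so V S E (outer S v v))"
    by (rule tr_proj_le[OF F Q psd_ext_so_S[OF F VS D]])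
  also have "\<dots> \<le> ip S v v" by (rule trPhi_le[OF F VS D])
  finally have "sf S (Mop V S E Q) v v \<le> ip S v v" by (simp add: sfMop[OF F])
  then show "0 \<le> sf S (ident_minus S (Mop V S E Q)) v v" by (simp add: sf_ident_minus[OF F])
qed

lemma idm_Mp: "ident_minus S (Mp V S E Q) = (\<lambda>f g. Mop V S E (idop S) f g - Mop V S E Q f g)"
  unfolding ident_minus_def Mp_def by (auto intro!: ext)

lemma sf_MopI: "finite S \<Longrightarrow> sf S (Mop V S E (idop S)) v v = tr S (ext_so V S E (outer S v v))"
  by (simp add: sfMop mult_idop_left)

lemma H3par:
  assumes F: "finite S" and VS: "V \<subseteq> S" and D: "DProg V E" and Q: "is_proj S Q"
  shows "psd S (ident_minus S (Mp V S E Q))"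
  unfolding psd_iff
proof (intro conjI allI)
  show "in_L S (ident_minus S (Mp V S E Q))" by (simp add: ident_minus_in_L)
  fix v
  have "tr S (mult S Q (ext_so V S E (outer S v v))) \<le> tr S (ext_so V S E (outer S v v))"
    by (rule tr_proj_le[OF F Q psd_ext_so_S[OF F VS D]])
  then show "0 \<le> sf S (ident_minus S (Mp V S E Q)) v v"
    by (simp add: idm_Mp sf_diff sfMop[OF F] mult_idop_left[OF F ext_so_in_L])
qed

lemma sat_tot_iff:
  assumes F: "finite S" and VS: "V \<subseteq> S" and D: "DProg V E" and Q: "is_proj S Q" and P: "is_proj S P"
  shows "sat_tot V S E P Q \<longleftrightarrow> img S P \<subseteq> img S (Mop V S E Q)"
proof -
  let ?T = "\<lambda>X \<rho>. tr X (mult X (ext S X Q) (ext_so V X E \<rho>))"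
  have "sat_tot V S E P Q \<longleftrightarrow> (\<forall>X \<rho>. finite X \<longrightarrow> V \<union> S \<subseteq> X \<longrightarrow> dens X \<rho> \<longrightarrow>
            Re (tr X (mult X (ext S X P) \<rho>)) \<le> Re (?T X \<rho>))"
    unfolding sat_tot_def by simp
  also have "\<dots> \<longleftrightarrow> img S P \<subseteq> img S (Mop V S E Q)"
  proof (rule satM[OF F VS P Mop_in_L])
    fix X \<rho> assume FX: "finite X" and SX: "S \<subseteq> X"
    show "?T X \<rho> = tr X (mult X (ext S X (Mop V S E Q)) \<rho>)" by (rule tr_Mop[OF FX VS SX])
  next
    fix X \<sigma> assume FX: "finite X" and SX: "S \<subseteq> X" and ps: "psd X \<sigma>"
    have "0 \<le> ?T X \<sigma>"
      by (rule tr_proj_psd[OF FX ext_proj[OF FX SX Q] DProg_cp[OF D FX _ ps]]) (use VS SX in auto)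
    then show "0 \<le> Re (?T X \<sigma>)" by (simp add: nonneg_complex_iff)
  next
    show "psd S (ident_minus S (Mop V S E Q))" by (rule H3tot[OF F VS D Q])
  qed
  finally show ?thesis .
qed

lemma sat_par_iff:
  assumes F: "finite S" and VS: "V \<subseteq> S" and D: "DProg V E" and Q: "is_proj S Q" and P: "is_proj S P"
  shows "sat_par V S E P Q \<longleftrightarrow> img S P \<subseteq> img S (Mp V S E Q)"
proof -
  let ?T = "\<lambda>X \<rho>. tr X (mult X (ext S X Q) (ext_so V X E \<rho>)) + tr X \<rho> - tr X (ext_so V X E \<rho>)"
  have "sat_par V S E P Q \<longleftrightarrow> (\<forall>X \<rho>. finite X \<longrightarrow> V \<union> S \<subseteq> X \<longrightarrow> dens X \<rho> \<longrightarrow>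
            Re (tr X (mult X (ext S X P) \<rho>)) \<le> Re (?T X \<rho>))"
    unfolding sat_par_def by simp
  also have "\<dots> \<longleftrightarrow> img S P \<subseteq> img S (Mp V S E Q)"
  proof (rule satM[OF F VS P Mp_in_L])
    fix X \<rho> assume FX: "finite X" and SX: "S \<subseteq> X" and L: "in_L X \<rho>"
    have e1: "tr X \<rho> = tr X (mult X (ext S X (idop S)) \<rho>)"
      by (simp add: ext_idop[OF SX] mult_idop_left[OF FX L])
    have e2: "tr X (ext_so V X E \<rho>) = tr X (mult X (ext S X (Mop V S E (idop S))) \<rho>)"
    proof -
      have "tr X (ext_so V X E \<rho>) = tr X (mult X (ext S X (idop S)) (ext_so V X E \<rho>))"
        by (simp add: ext_idop[OF SX] mult_idop_left[OF FX])
      also have "\<dots> = tr X (mult X (ext S X (Mop V S E (idop S))) \<rho>)" by (rule tr_Mop[OF FX VS SX])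
      finally show ?thesis .
    qed
    show "?T X \<rho> = tr X (mult X (ext S X (Mp V S E Q)) \<rho>)"
      unfolding Mp_def ext_add ext_diff mult_add_left mult_diff_left tr_add tr_diff
      using e1 e2 tr_Mop[OF FX VS SX, of Q E \<rho>] by simp
  next
    fix X \<sigma> assume FX: "finite X" and SX: "S \<subseteq> X" and ps: "psd X \<sigma>"
    have VX: "V \<subseteq> X" using VS SX by auto
    have "0 \<le> tr X (mult X (ext S X Q) (ext_so V X E \<sigma>))"
      by (rule tr_proj_psd[OF FX ext_proj[OF FX SX Q] DProg_cp[OF D FX VX ps]])
    moreover have "tr X (ext_so V X E \<sigma>) \<le> tr X \<sigma>" by (rule tr_nonincr[OF FX D VX ps])
    ultimately show "0 \<le> Re (?T X \<sigma>)" by (simp add: less_eq_complex_def)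
  next
    show "psd S (ident_minus S (Mp V S E Q))" by (rule H3par[OF F VS D Q])
  qed
  finally show ?thesis .
qed

lemma apply_Mp: "finite S \<Longrightarrow> supp_vec S v \<Longrightarrow>
   apply_op S (Mp V S E Q) v = (\<lambda>f. apply_op S (Mop V S E Q) v f + v f - apply_op S (Mop V S E (idop S)) v f)"
proof -
  assume F: "finite S" and sv: "supp_vec S v"
  have "apply_op S (Mp V S E Q) v = (\<lambda>f. apply_op S (Mop V S E Q) v f + apply_op S (idop S) v f - apply_op S (Mop V S E (idop S)) v f)"
    unfolding Mp_def apply_op_def by (auto intro!: ext simp: algebra_simps sum.distrib sum_subtractf)
  then show ?thesis using apply_idop[OF F sv] by simp
qed

lemma fix_meet:
  assumes F: "finite S" and VS: "V \<subseteq> S" and D: "DProg V E" and Q: "is_proj S Q"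
  shows "img S (Mop V S E Q) = img S (Mp V S E Q) \<inter> img S (Mop V S E (idop S))"
proof (intro equalityI subsetI)
  fix v assume v: "v \<in> img S (Mop V S E Q)"
  then have sv: "supp_vec S v" and MQ: "apply_op S (Mop V S E Q) v = v" unfolding img_def by auto
  have sQ: "sf S (Mop V S E Q) v v = ip S v v" using MQ by (simp add: sf_ip)
  have a: "0 \<le> sf S (ident_minus S (Mp V S E Q)) v v" using H3par[OF F VS D Q] by (simp add: psd_iff)
  have b: "0 \<le> sf S (ident_minus S (Mop V S E (idop S))) v v" using H3tot[OF F VS D idop_proj[OF F]] by (simp add: psd_iff)
  have "sf S (ident_minus S (Mop V S E (idop S))) v v = 0"
    using a b sQ by (simp add: idm_Mp sf_diff sf_ident_minus[OF F])
  then have "apply_op S (ident_minus S (Mop V S E (idop S))) v = (\<lambda>f. 0)"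
    by (rule psd_kernel[OF F H3tot[OF F VS D idop_proj[OF F]]])
  then have MI: "apply_op S (Mop V S E (idop S)) v = v"
    using apply_ident_minus[OF F sv] by (auto simp: fun_eq_iff)
  have "apply_op S (Mp V S E Q) v = v" using apply_Mp[OF F sv] MQ MI by simp
  then show "v \<in> img S (Mp V S E Q) \<inter> img S (Mop V S E (idop S))" using MI sv unfolding img_def by simp
next
  fix v assume v: "v \<in> img S (Mp V S E Q) \<inter> img S (Mop V S E (idop S))"
  then have sv: "supp_vec S v" and Mpv: "apply_op S (Mp V S E Q) v = v"
    and MI: "apply_op S (Mop V S E (idop S)) v = v" unfolding img_def by auto
  have "apply_op S (Mop V S E Q) v = v"
    using Mpv MI apply_Mp[OF F sv, of V E Q] by (auto simp: fun_eq_iff)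
  then show "v \<in> img S (Mop V S E Q)" using sv unfolding img_def by simp
qed

lemma wp_char:
  assumes FV: "finite V" and FU: "finite U" and D: "DProg V E" and Q: "is_proj U Q0"
  shows "is_proj (V \<union> U) (wp V U E Q0) \<and>
         img (V \<union> U) (wp V U E Q0) = img (V \<union> U) (Mop V (V \<union> U) E (ext U (V \<union> U) Q0))"
proof -
  let ?S = "V \<union> U"
  let ?Q = "ext U ?S Q0"
  let ?M = "Mop V ?S E ?Q"
  have F: "finite ?S" using FV FU by simp
  have VS: "V \<subseteq> ?S" by simp
  have Qs: "is_proj ?S ?Q" by (rule ext_proj[OF F _ Q]) simp
  obtain P0 where P0: "is_proj ?S P0" "img ?S P0 = img ?S ?M"
    using exists_proj[OF F img_subsp] by blast
  have "wp V U E Q0 = P0"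
    unfolding wp_def
  proof (rule the_proj_eq[OF F P0(1)])
    show "sat_tot V ?S E P0 ?Q" using sat_tot_iff[OF F VS D Qs P0(1)] P0(2) by simp
    show "\<forall>P'. is_proj ?S P' \<and> sat_tot V ?S E P' ?Q \<longrightarrow> pleq ?S P' P0"
      using sat_tot_iff[OF F VS D Qs] P0(2) unfolding pleq_def by blast
  qed
  then show ?thesis using P0 by simp
qed

lemma wlp_char:
  assumes FV: "finite V" and FU: "finite U" and D: "DProg V E" and Q: "is_proj U Q0"
  shows "is_proj (V \<union> U) (wlp V U E Q0) \<and>
         img (V \<union> U) (wlp V U E Q0) = img (V \<union> U) (Mp V (V \<union> U) E (ext U (V \<union> U) Q0))"
proof -
  let ?S = "V \<union> U"
  let ?Q = "ext U ?S Q0"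
  let ?M = "Mp V ?S E ?Q"
  have F: "finite ?S" using FV FU by simp
  have VS: "V \<subseteq> ?S" by simp
  have Qs: "is_proj ?S ?Q" by (rule ext_proj[OF F _ Q]) simp
  obtain P0 where P0: "is_proj ?S P0" "img ?S P0 = img ?S ?M"
    using exists_proj[OF F img_subsp] by blast
  have "wlp V U E Q0 = P0"
    unfolding wlp_def
  proof (rule the_proj_eq[OF F P0(1)])
    show "sat_par V ?S E P0 ?Q" using sat_par_iff[OF F VS D Qs P0(1)] P0(2) by simp
    show "\<forall>P'. is_proj ?S P' \<and> sat_par V ?S E P' ?Q \<longrightarrow> pleq ?S P' P0"
      using sat_par_iff[OF F VS D Qs] P0(2) unfolding pleq_def by blast
  qed
  then show ?thesis using P0 by simp
qed



lemma sf_sandwich: "sf X (mult X (mult X B A) (adj B)) w w = sf X A (apply_op X (adj B) w) (apply_op X (adj B) w)"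
proof -
  have "sf X (mult X (mult X B A) (adj B)) w w = ip X w (apply_op X B (apply_op X A (apply_op X (adj B) w)))"
    by (simp add: sf_ip apply_op_mult)
  also have "\<dots> = ip X (apply_op X (adj B) w) (apply_op X A (apply_op X (adj B) w))"
    by (simp add: ip_adj)
  also have "\<dots> = sf X A (apply_op X (adj B) w) (apply_op X (adj B) w)" by (simp add: sf_ip)
  finally show ?thesis .
qed

lemma psd_tr0:
  assumes F: "finite S" and P: "psd S C" and T: "tr S C = 0"
  shows "C = (\<lambda>f g. 0)"
proof -
  have L: "in_L S C" using P by (simp add: psd_iff)
  have nn: "\<And>f. f \<in> basis S \<Longrightarrow> 0 \<le> C f f" using P sf_ket_ket[OF F] by (metis psd_iff)
  have d0: "\<And>f. f \<in> basis S \<Longrightarrow> C f f = 0"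
    using T nn sum_nonneg_eq_0_iff[of "basis S" "\<lambda>f. C f f"] finite_basis[OF F] unfolding tr_def by blast
  show ?thesis
  proof (intro ext)
    fix g f
    show "C g f = 0"
    proof (cases "f \<in> basis S \<and> g \<in> basis S")
      case True
      have "sf S C (ket f) (ket f) = 0" using True d0 sf_ket_ket[OF F] by simp
      then have "apply_op S C (ket f) = (\<lambda>f. 0)" by (rule psd_kernel[OF F P])
      then have "apply_op S C (ket f) g = 0" by simp
      moreover have "apply_op S C (ket f) g = C g f"
        using True F by (simp add: apply_op_def sf_ket_left[symmetric] sf_ket_ket)
      ultimately show ?thesis by simp
    next
      case False
      then show ?thesis using L by (auto simp: in_LD1 in_LD2)
    qed
  qed
qed

lemma zero_tr_kernel:
  assumes F: "finite S" and T: "is_proj S T" and A: "psd S A" and Z: "tr S (mult S T A) = 0"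
    and y: "y \<in> img S T"
  shows "apply_op S A y = (\<lambda>f. 0)"
proof -
  define C where "C = mult S (mult S T A) (adj T)"
  have aT: "adj T = T" by (rule proj_herm[OF T])
  have TT: "mult S T T = T" using proj_props[OF T] by simp
  have pC: "psd S C" unfolding C_def by (rule psd_sandwich[OF F A])
  have "tr S C = tr S (mult S (mult S T A) T)" unfolding C_def aT ..
  also have "\<dots> = tr S (mult S T (mult S T A))" by (rule tr_mult_comm)
  also have "\<dots> = tr S (mult S T A)" by (simp add: mult_assoc[symmetric] TT)
  finally have "tr S C = 0" using Z by simp
  then have C0: "C = (\<lambda>f g. 0)" by (rule psd_tr0[OF F pC])
  have Ty: "apply_op S T y = y" using y unfolding img_def by simp
  have "sf S A y y = sf S C y y" unfolding C_def by (simp only: sf_sandwich) (simp add: aT Ty)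
  also have "\<dots> = 0" unfolding C0 sf_def by simp
  finally show ?thesis by (rule psd_kernel[OF F A])
qed

lemma sp_char:
  assumes FV: "finite V" and FU: "finite U" and D: "DProg V E" and Q: "is_proj U Q0"
  shows "is_proj (V \<union> U) (sp V U E Q0) \<and>
         img (V \<union> U) (ext U (V \<union> U) Q0) \<subseteq> img (V \<union> U) (Mp V (V \<union> U) E (sp V U E Q0)) \<and>
         (\<forall>R. is_proj (V \<union> U) R \<and> img (V \<union> U) (ext U (V \<union> U) Q0) \<subseteq> img (V \<union> U) (Mp V (V \<union> U) E R)
              \<longrightarrow> pleq (V \<union> U) (sp V U E Q0) R)"
proof -
  define S where "S = V \<union> U"
  define Qs where "Qs = ext U S Q0"
  have F: "finite S" using FV FU by (simp add: S_def)
  have VS: "V \<subseteq> S" by (simp add: S_def)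
  have QsP: "is_proj S Qs" unfolding Qs_def by (rule ext_proj[OF F _ Q]) (simp add: S_def)
  define A where "A v = ext_so V S E (outer S v v)" for v
  have pA: "\<And>v. psd S (A v)" unfolding A_def by (rule psd_ext_so_S[OF F VS D])
  have LA: "\<And>v. in_L S (A v)" unfolding A_def by simp
  define H where "H = {y. supp_vec S y \<and> (\<forall>v\<in>img S Qs. apply_op S (A v) y = (\<lambda>f. 0))}"
  have sH: "subsp S H" unfolding subsp_def H_def
    by (auto simp: apply_op_lin apply_op_zero supp_vec_def)
  obtain PH where PH: "is_proj S PH" "img S PH = H" using exists_proj[OF F sH] by blast
  define R0 where "R0 = ident_minus S PH"
  have R0P: "is_proj S R0" unfolding R0_def by (rule ident_minus_proj[OF F PH(1)])
  have sfI: "\<And>R v. sf S (ident_minus S (Mp V S E R)) v v = tr S (A v) - tr S (mult S R (A v))"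
    by (simp add: idm_Mp sf_diff sfMop[OF F] mult_idop_left[OF F ext_so_in_L] A_def)
  have trid: "\<And>B. tr S (mult S (ident_minus S B) (A v)) = tr S (A v) - tr S (mult S B (A v))" for v
    unfolding ident_minus_def by (simp add: mult_diff_left tr_diff mult_idop_left[OF F LA])
  have a: "img S Qs \<subseteq> img S (Mp V S E R0)"
  proof
    fix v assume v: "v \<in> img S Qs"
    then have sv: "supp_vec S v" unfolding img_def by simp
    have AP: "mult S (A v) PH = (\<lambda>f g. 0)"
    proof (intro ext)
      fix f g
      show "mult S (A v) PH f g = 0"
      proof (cases "f \<in> basis S \<and> g \<in> basis S")
        case True
        have "col PH g \<in> H" using col_img[OF PH(1)] PH(2) by blast
        then have "apply_op S (A v) (col PH g) = (\<lambda>f. 0)" using v unfolding H_def by blast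
        then have "apply_op S (A v) (col PH g) f = 0" by simp
        then show ?thesis using True by (simp add: apply_op_def col_def mult_in)
      qed (simp add: mult_out)
    qed
    have "tr S (mult S PH (A v)) = tr S (mult S (A v) PH)" by (rule tr_mult_comm)
    also have "\<dots> = 0" unfolding AP tr_def by simp
    finally have t0: "tr S (mult S PH (A v)) = 0" .
    have "sf S (ident_minus S (Mp V S E R0)) v v = 0"
      unfolding sfI R0_def trid t0 by simp
    then have "apply_op S (ident_minus S (Mp V S E R0)) v = (\<lambda>f. 0)"
      by (rule psd_kernel[OF F H3par[OF F VS D R0P]])
    then have "apply_op S (Mp V S E R0) v = v" using apply_ident_minus[OF F sv] by (auto simp: fun_eq_iff)
    then show "v \<in> img S (Mp V S E R0)" using sv unfolding img_def by simp
  qed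
  have b: "pleq S R0 R" if R: "is_proj S R" and inc: "img S Qs \<subseteq> img S (Mp V S E R)" for R
  proof -
    define T where "T = ident_minus S R"
    have TP: "is_proj S T" unfolding T_def by (rule ident_minus_proj[OF F R])
    have yH: "y \<in> H" if y: "y \<in> img S T" for y
    proof -
      have "\<forall>v\<in>img S Qs. apply_op S (A v) y = (\<lambda>f. 0)"
      proof
        fix v assume v: "v \<in> img S Qs"
        have Mv: "apply_op S (Mp V S E R) v = v" using inc v unfolding img_def by auto
        have e1: "sf S (ident_minus S (Mp V S E R)) v v = ip S v v - sf S (Mp V S E R) v v"
          by (rule sf_ident_minus[OF F])
        have e2: "sf S (Mp V S E R) v v = ip S v v" using Mv by (simp add: sf_ip)
        have "sf S (ident_minus S (Mp V S E R)) v v = 0" using e1 e2 by simp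
        then have "tr S (mult S T (A v)) = 0" unfolding sfI T_def trid by simp
        then show "apply_op S (A v) y = (\<lambda>f. 0)" by (rule zero_tr_kernel[OF F TP pA _ y])
      qed
      moreover have "supp_vec S y" using y unfolding img_def by simp
      ultimately show ?thesis unfolding H_def by simp
    qed
    show ?thesis unfolding pleq_def
    proof
      fix x assume x: "x \<in> img S R0"
      then have sx: "supp_vec S x" and R0x: "apply_op S R0 x = x" unfolding img_def by auto
      have PHx: "apply_op S PH x = (\<lambda>f. 0)"
        using R0x apply_ident_minus[OF F sx, of PH] unfolding R0_def by (auto simp: fun_eq_iff)
      define y where "y = apply_op S T x"
      have yT: "y \<in> img S T" unfolding y_def by (rule apply_proj_img[OF TP])
      have "y \<in> img S PH" using yH[OF yT] PH(2) by simp
      then have PHy: "apply_op S PH y = y" unfolding img_def by simp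
      have sy: "supp_vec S y" using yT unfolding img_def by simp
      have Ty: "apply_op S T y = y" using yT unfolding img_def by simp
      have "ip S y y = ip S y (apply_op S T x)" unfolding y_def ..
      also have "\<dots> = ip S (apply_op S (adj T) y) x" by (rule ip_adj)
      also have "\<dots> = ip S y x" using proj_herm[OF TP] Ty by simp
      also have "\<dots> = ip S (apply_op S (adj PH) y) x" using proj_herm[OF PH(1)] PHy by simp
      also have "\<dots> = ip S y (apply_op S PH x)" by (rule ip_adj[symmetric])
      also have "\<dots> = 0" unfolding PHx ip_def by simp
      finally have "ip S y y = 0" .
      then have y0: "y = (\<lambda>f. 0)" using ip_pos[OF F sy] by fastforce
      have "apply_op S T x = (\<lambda>f. x f - apply_op S R x f)" unfolding T_def by (rule apply_ident_minus[OF F sx])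
      then have "apply_op S R x = x" using y0 unfolding y_def by (auto simp: fun_eq_iff)
      then show "x \<in> img S R" using sx unfolding img_def by simp
    qed
  qed
  have "sp V U E Q0 = R0"
    unfolding sp_def S_def[symmetric] Qs_def[symmetric]
  proof (rule the_proj_eq_min[OF F R0P])
    show "sat_par V S E Qs R0" using sat_par_iff[OF F VS D R0P QsP] a by simp
    show "\<forall>R'. is_proj S R' \<and> sat_par V S E Qs R' \<longrightarrow> pleq S R0 R'"
      using sat_par_iff[OF F VS D _ QsP] b by blast
  qed
  then show ?thesis using R0P a b unfolding S_def Qs_def by simp
qed



theorem theorem4p9:
  fixes V W :: "qvar set" and E :: superop and P Q :: op
  assumes "finite V" and "DProg V E" and "finite W"
    and "is_proj W P" and "is_proj W Q"
  shows "pleq (V \<union> W) (sp V (V \<union> W) E (wlp V W E Q)) (ext W (V \<union> W) Q)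
       \<and> pleq (V \<union> W) (ext W (V \<union> W) P) (wlp V (V \<union> W) E (sp V W E P))
       \<and> wp V W E Q = pmeet (V \<union> W) (wlp V W E Q) (wp V W E (idop W))
       \<and> pleq (V \<union> W) (sp V (V \<union> W) E (wp V W E Q)) (ext W (V \<union> W) Q)
       \<and> (pleq (V \<union> W) (ext W (V \<union> W) P) (wp V W E (idop W)) \<longrightarrow>
            pleq (V \<union> W) (ext W (V \<union> W) P) (wp V (V \<union> W) E (sp V W E P)))"
proof -
  note FV = assms(1) and D = assms(2) and FW = assms(3) and PP = assms(4) and QP = assms(5)
  define S where "S = V \<union> W"
  have SS: "V \<union> S = S" by (auto simp: S_def)
  have F: "finite S" using FV FW by (simp add: S_def)
  have FS: "finite S" using F .
  have VS: "V \<subseteq> S" by (simp add: S_def)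
  have WS: "W \<subseteq> S" by (simp add: S_def)
  define Qs where "Qs = ext W S Q"
  define Ps where "Ps = ext W S P"
  have QsP: "is_proj S Qs" unfolding Qs_def by (rule ext_proj[OF F WS QP])
  have PsP: "is_proj S Ps" unfolding Ps_def by (rule ext_proj[OF F WS PP])
  have wlpQ: "is_proj S (wlp V W E Q)" "img S (wlp V W E Q) = img S (Mp V S E Qs)"
    using wlp_char[OF FV FW D QP] unfolding S_def[symmetric] Qs_def[symmetric] by auto
  have wpQ: "is_proj S (wp V W E Q)" "img S (wp V W E Q) = img S (Mop V S E Qs)"
    using wp_char[OF FV FW D QP] unfolding S_def[symmetric] Qs_def[symmetric] by auto
  have wpI: "is_proj S (wp V W E (idop W))" "img S (wp V W E (idop W)) = img S (Mop V S E (idop S))"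
    using wp_char[OF FV FW D idop_proj[OF FW]] ext_idop[OF WS] unfolding S_def[symmetric] by auto
  have spP: "is_proj S (sp V W E P)" "img S Ps \<subseteq> img S (Mp V S E (sp V W E P))"
    using sp_char[OF FV FW D PP] unfolding S_def[symmetric] Ps_def[symmetric] by auto
  have spS: "\<And>R. is_proj S R \<Longrightarrow> is_proj S (sp V S E R) \<and>
         img S R \<subseteq> img S (Mp V S E (sp V S E R)) \<and>
         (\<forall>R'. is_proj S R' \<and> img S R \<subseteq> img S (Mp V S E R') \<longrightarrow> pleq S (sp V S E R) R')"
  proof -
    fix R assume R: "is_proj S R"
    have LR: "in_L S R" using proj_props[OF R] by simp
    show "?thesis R" using sp_char[OF FV F D R] unfolding SS ext_self[OF LR] .
  qed
  have wlpS: "\<And>R. is_proj S R \<Longrightarrow> img S (wlp V S E R) = img S (Mp V S E R)"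
  proof -
    fix R assume R: "is_proj S R"
    have LR: "in_L S R" using proj_props[OF R] by simp
    show "?thesis R" using wlp_char[OF FV F D R] unfolding SS ext_self[OF LR] by simp
  qed
  have wpS: "\<And>R. is_proj S R \<Longrightarrow> img S (wp V S E R) = img S (Mop V S E R)"
  proof -
    fix R assume R: "is_proj S R"
    have LR: "in_L S R" using proj_props[OF R] by simp
    show "?thesis R" using wp_char[OF FV F D R] unfolding SS ext_self[OF LR] by simp
  qed
  have meetQ: "img S (Mop V S E Qs) = img S (Mp V S E Qs) \<inter> img S (Mop V S E (idop S))"
    by (rule fix_meet[OF F VS D QsP])
  have c1: "pleq S (sp V S E (wlp V W E Q)) Qs"
    using spS[OF wlpQ(1)] QsP wlpQ(2) by blast
  have c2: "pleq S Ps (wlp V S E (sp V W E P))"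
    unfolding pleq_def using wlpS[OF spP(1)] spP(2) by simp
  have c3: "wp V W E Q = pmeet S (wlp V W E Q) (wp V W E (idop W))"
    using pmeet_eq[OF F wpQ(1)] wpQ(2) wlpQ(2) wpI(2) meetQ by simp
  have c4: "pleq S (sp V S E (wp V W E Q)) Qs"
    using spS[OF wpQ(1)] QsP wpQ(2) meetQ by blast
  have c5: "pleq S Ps (wp V W E (idop W)) \<longrightarrow> pleq S Ps (wp V S E (sp V W E P))"
  proof
    assume "pleq S Ps (wp V W E (idop W))"
    then have "img S Ps \<subseteq> img S (Mop V S E (idop S))" unfolding pleq_def using wpI(2) by simp
    then show "pleq S Ps (wp V S E (sp V W E P))"
      unfolding pleq_def wpS[OF spP(1)] fix_meet[OF F VS D spP(1)] using spP(2) by blast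
  qed
  show ?thesis using c1 c2 c3 c4 c5 unfolding S_def Qs_def Ps_def by blast
qed

end
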